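(* Let $k\ge 1$ be an integer and let $A_k\in\mathbb{Z}^{(2k+1)\times(4k+2)}$ be the matrix defined below. Then for every $\mathbf{b}\in\mathbb{Z}^{2k+1}$ with $\mathcal{F}_{A_k}(\mathbf{b})\neq\emptyset$, the Graver fiber graph $G:=G_{A_k,\mathbf{b},\mathcal{G}(A_k)}$ satisfies $\lambda(G)=\delta(G)$, i.e. its edge-connectivity equals its minimal degree.
   Context: Let $I_k$ be the $k\times k$ identity matrix and $\mathbf{1}_k\in\mathbb{Z}^k$ the all-ones vector. Define $$A_k=\begin{pmatrix} I_k & I_k & 0 & 0 & -\mathbf{1}_k & \mathbf{0}\\ 0&0&I_k&I_k&\mathbf{0}&-\mathbf{1}_k\\ 0&0&0&0&1&1\end{pmatrix}\in\mathbb{Z}^{(2k+1)\times(4k+2)},$$ where the unlabeled $0$'s are zero blocks of the appropriate sizes (the last two columns are single columns). For $A\in\mathbb{Z}^{d\times n}$ and $\mathbf{b}\in\mathbb{Z}^d$, the fiber is $\mathcal{F}_A(\mathbf{b})=\{\mathbf{u}\in\mathbb{Z}_{\ge0}^n: A\mathbf{u}=\mathbf{b}\}$. For $\mathcal{M}\subset\mathbb{Z}^n$, the fiber graph $G_{A,\mathbf{b},\mathcal{M}}$ is the simple graph with vertex set $\mathcal{F}_A(\mathbf{b})$ in which distinct $\mathbf{u},\mathbf{v}$ are adjacent iff $\mathbf{u}-\mathbf{v}\in\mathcal{M}$ or $\mathbf{v}-\mathbf{u}\in\mathcal{M}$. The partial order $\sqsubseteq$ on $\mathbb{Z}^n$: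 $\mathbf{u}\sqsubseteq\mathbf{v}$ iff $u_iv_i\ge0$ and $|u_i|\le|v_i|$ for all $i$. The Graver basis $\mathcal{G}(A)$ is the set of $\sqsubseteq$-minimal elements of $(\ker(A)\cap\mathbb{Z}^n)\setminus\{\mathbf{0}\}$. For a finite graph $G$, $\delta(G)$ is the minimum vertex degree. $G$ is $\ell$-edge-connected if it has more than one vertex and $G$ minus any set of fewer than $\ell$ edges is connected; $\lambda(G)$ is the largest $\ell$ such that $G$ is $\ell$-edge-connected (with $\lambda=0$ for a one-vertex graph). *)

theory Defs
  imports Main
begin

text \<open>Integer vectors of length n are modelled as functions nat \<Rightarrow> int vanishing
  outside the index range {0..<n}; a d\<times>n integer matrix is a function
  nat \<Rightarrow> nat \<Rightarrow> int (row, column), only entries with row < d, column < n matter.\<close>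

definition Zvec :: "nat \<Rightarrow> (nat \<Rightarrow> int) set" where
  "Zvec n = {u. \<forall>i\<ge>n. u i = 0}"

definition mat_vec :: "(nat \<Rightarrow> nat \<Rightarrow> int) \<Rightarrow> nat \<Rightarrow> nat \<Rightarrow> (nat \<Rightarrow> int) \<Rightarrow> (nat \<Rightarrow> int)" where
  "mat_vec A d n u = (\<lambda>i. if i < d then (\<Sum>j<n. A i j * u j) else 0)"

definition Amat :: "nat \<Rightarrow> nat \<Rightarrow> nat \<Rightarrow> int" where
  "Amat k i j =
     (if j < k then (if i = j then 1 else 0)
      else if j < 2*k then (if i = j - k then 1 else 0)
      else if j < 3*k then (if i = k + (j - 2*k) then 1 else 0)
      else if j < 4*k then (if i = k + (j - 3*k) then 1 else 0)
      else if j = 4*k then (if i < k then -1 else if i = 2*k then 1 else 0)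
      else if j = 4*k + 1 then (if k \<le> i \<and> i < 2*k then -1 else if i = 2*k then 1 else 0)
      else 0)"

definition fiber :: "(nat \<Rightarrow> nat \<Rightarrow> int) \<Rightarrow> nat \<Rightarrow> nat \<Rightarrow> (nat \<Rightarrow> int) \<Rightarrow> (nat \<Rightarrow> int) set" where
  "fiber A d n b = {u \<in> Zvec n. (\<forall>i<n. 0 \<le> u i) \<and> mat_vec A d n u = b}"

definition conformal :: "(nat \<Rightarrow> int) \<Rightarrow> (nat \<Rightarrow> int) \<Rightarrow> bool" where
  "conformal u v \<longleftrightarrow> (\<forall>i. 0 \<le> u i * v i \<and> \<bar>u i\<bar> \<le> \<bar>v i\<bar>)"

definition int_kernel :: "(nat \<Rightarrow> nat \<Rightarrow> int) \<Rightarrow> nat \<Rightarrow> nat \<Rightarrow> (nat \<Rightarrow> int) set" where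
  "int_kernel A d n = {u \<in> Zvec n. mat_vec A d n u = (\<lambda>_. 0)}"

definition graver :: "(nat \<Rightarrow> nat \<Rightarrow> int) \<Rightarrow> nat \<Rightarrow> nat \<Rightarrow> (nat \<Rightarrow> int) set" where
  "graver A d n = {g \<in> int_kernel A d n - {\<lambda>_. 0}.
      \<forall>u \<in> int_kernel A d n - {\<lambda>_. 0}. conformal u g \<longrightarrow> u = g}"

text \<open>Simple graphs: vertex set V, edge set E of 2-element subsets of V.\<close>

definition fiber_edges :: "(nat \<Rightarrow> nat \<Rightarrow> int) \<Rightarrow> nat \<Rightarrow> nat \<Rightarrow> (nat \<Rightarrow> int) \<Rightarrow> (nat \<Rightarrow> int) set
    \<Rightarrow> (nat \<Rightarrow> int) set set" where
  "fiber_edges A d n b M = {{u, v} | u v. u \<in> fiber A d n b \<and> v \<in> fiber A d n b \<and> u \<noteq> v \<and>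
      ((\<lambda>i. u i - v i) \<in> M \<or> (\<lambda>i. v i - u i) \<in> M)}"

definition graph_connected :: "'a set \<Rightarrow> 'a set set \<Rightarrow> bool" where
  "graph_connected V E \<longleftrightarrow> (\<forall>u\<in>V. \<forall>v\<in>V. (\<lambda>x y. {x, y} \<in> E)\<^sup>*\<^sup>* u v)"

definition edge_connected :: "'a set \<Rightarrow> 'a set set \<Rightarrow> nat \<Rightarrow> bool" where
  "edge_connected V E l \<longleftrightarrow> 1 < card V \<and>
     (\<forall>F. F \<subseteq> E \<and> finite F \<and> card F < l \<longrightarrow> graph_connected V (E - F))"

definition edge_connectivity :: "'a set \<Rightarrow> 'a set set \<Rightarrow> nat" where
  "edge_connectivity V E = (if 1 < card V then (GREATEST l. edge_connected V E l) else 0)"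

definition degree :: "'a set set \<Rightarrow> 'a \<Rightarrow> nat" where
  "degree E v = card {e \<in> E. v \<in> e}"

definition min_degree :: "'a set \<Rightarrow> 'a set set \<Rightarrow> nat" where
  "min_degree V E = Min (degree E ` V)"

end

theory Submission
  imports Defs
begin


fun wedges :: "'a list \<Rightarrow> 'a set set" where
  "wedges (a#b#r) = insert {a,b} (wedges (b#r))"
| "wedges _ = {}"

fun walk :: "'a set set \<Rightarrow> 'a list \<Rightarrow> bool" where
  "walk E (a#b#r) = ({a,b} \<in> E \<and> walk E (b#r))"
| "walk E _ = True"

lemma walk_conn:
  "walk E p \<Longrightarrow> p \<noteq> [] \<Longrightarrow> wedges p \<inter> F = {} \<Longrightarrow>
     (\<lambda>x y. {x,y} \<in> E - F)\<^sup>*\<^sup>* (hd p) (last p)"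
proof (induction E p rule: walk.induct)
  case (1 E a b r)
  then have "(\<lambda>x y. {x,y} \<in> E - F)\<^sup>*\<^sup>* b (last (b#r))" by auto
  moreover have "{a,b} \<in> E - F" using 1 by auto
  ultimately show ?case by (auto intro: converse_rtranclp_into_rtranclp)
qed auto

definition Rel :: "'a set set \<Rightarrow> nat \<Rightarrow> 'a \<Rightarrow> 'a \<Rightarrow> bool" where
  "Rel E d u v \<longleftrightarrow> (\<forall>F. F \<subseteq> E \<longrightarrow> finite F \<longrightarrow> card F < d \<longrightarrow> (\<lambda>x y. {x,y} \<in> E - F)\<^sup>*\<^sup>* u v)"

lemma Rel_refl: "Rel E d u u" by (simp add: Rel_def)

lemma sym_rtr:
  assumes "(\<lambda>x y. {x,y} \<in> G)\<^sup>*\<^sup>* u v" shows "(\<lambda>x y. {x,y} \<in> G)\<^sup>*\<^sup>* v u"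
proof -
  have "((\<lambda>x y. {x,y} \<in> G)\<inverse>\<inverse>)\<^sup>*\<^sup>* v u" using assms by (simp add: rtranclp_conversep)
  moreover have "(\<lambda>x y. {x,y} \<in> G)\<inverse>\<inverse> = (\<lambda>x y. {x,y} \<in> G)"
    by (auto simp: fun_eq_iff insert_commute)
  ultimately show ?thesis by simp
qed

lemma Rel_sym: "Rel E d u v \<Longrightarrow> Rel E d v u"
  unfolding Rel_def using sym_rtr by metis

lemma Rel_trans: "Rel E d u v \<Longrightarrow> Rel E d v w \<Longrightarrow> Rel E d u w"
  unfolding Rel_def by (meson rtranclp_trans)

lemma Rel_family:
  assumes "finite W" "d \<le> card W"
    and "\<And>p. p\<in>W \<Longrightarrow> p \<noteq> [] \<and> hd p = u \<and> walk E p \<and> Rel E d (last p) v"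
    and "\<And>p q. p\<in>W \<Longrightarrow> q\<in>W \<Longrightarrow> p \<noteq> q \<Longrightarrow> wedges p \<inter> wedges q = {}"
  shows "Rel E d u v"
  unfolding Rel_def
proof (intro allI impI)
  fix F assume F: "F \<subseteq> E" "finite F" "card F < d"
  define J where "J = {p\<in>W. wedges p \<inter> F \<noteq> {}}"
  define f where "f p = (SOME e. e \<in> wedges p \<inter> F)" for p
  have fJ: "f p \<in> wedges p \<inter> F" if "p \<in> J" for p
  proof -
    have "\<exists>e. e \<in> wedges p \<inter> F" using that unfolding J_def by auto
    then show ?thesis unfolding f_def by (rule someI_ex)
  qed
  have "inj_on f J"
  proof (rule inj_onI)
    fix p q assume pq: "p \<in> J" "q \<in> J" "f p = f q"
    show "p = q"
    proof (rule ccontr)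
      assume "p \<noteq> q"
      moreover have "p \<in> W" "q \<in> W" using pq unfolding J_def by auto
      ultimately have "wedges p \<inter> wedges q = {}" using assms(4) by simp
      moreover have "f p \<in> wedges p" "f p \<in> wedges q" using fJ[OF pq(1)] fJ[OF pq(2)] pq(3) by auto
      ultimately show False by auto
    qed
  qed
  moreover have "f ` J \<subseteq> F" using fJ by auto
  ultimately have "card J \<le> card F" using F(2) by (intro card_inj_on_le)
  then have "card J < card W" using F assms(2) by linarith
  then have "J \<noteq> W" by auto
  moreover have "J \<subseteq> W" unfolding J_def by auto
  ultimately obtain p where p: "p \<in> W" "p \<notin> J" by auto
  then have wp: "wedges p \<inter> F = {}" unfolding J_def by auto
  have P: "p \<noteq> []" "hd p = u" "walk E p" "Rel E d (last p) v" using assms(3)[OF p(1)] by auto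
  have "(\<lambda>x y. {x,y} \<in> E - F)\<^sup>*\<^sup>* u (last p)"
    using walk_conn[OF P(3) P(1) wp] P(2) by simp
  moreover have "(\<lambda>x y. {x,y} \<in> E - F)\<^sup>*\<^sup>* (last p) v"
    using P(4) F unfolding Rel_def by auto
  ultimately show "(\<lambda>x y. {x,y} \<in> E - F)\<^sup>*\<^sup>* u v"
    by (rule rtranclp_trans)
qed

lemma ec_eq:
  assumes fin: "finite V" and Ed: "\<And>e. e\<in>E \<Longrightarrow> \<exists>x y. e = {x,y} \<and> x \<noteq> y \<and> x \<in> V \<and> y \<in> V"
    and ne: "V \<noteq> {}"
    and R: "\<And>u v. u\<in>V \<Longrightarrow> v\<in>V \<Longrightarrow> Rel E (min_degree V E) u v"
  shows "edge_connectivity V E = min_degree V E"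
proof (cases "1 < card V")
  case False
  moreover have "card V > 0" using ne fin by (simp add: card_gt_0_iff)
  ultimately have "card V = 1" by linarith
  then obtain v0 where V: "V = {v0}" by (auto simp: card_1_singleton_iff)
  have "E = {}"
  proof (rule ccontr)
    assume "E \<noteq> {}" then obtain e where "e \<in> E" by auto
    from Ed[OF this] obtain x y where "x \<noteq> y" "x \<in> V" "y \<in> V" by auto
    then show False using V by simp
  qed
  then have "degree E v0 = 0" by (simp add: degree_def)
  then have "min_degree V E = 0" using V by (simp add: min_degree_def)
  then show ?thesis using False by (simp add: edge_connectivity_def)
next
  case True
  define \<delta> where "\<delta> = min_degree V E"
  have finE: "finite E"
  proof -
    have "E \<subseteq> Pow V"
    proof
      fix e assume "e \<in> E"
      from Ed[OF this] obtain x y where "e = {x,y}" "x \<in> V" "y \<in> V" by auto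
      then show "e \<in> Pow V" by simp
    qed
    then show ?thesis using fin by (meson finite_Pow_iff finite_subset)
  qed
  have "\<delta> \<in> degree E ` V" unfolding \<delta>_def min_degree_def
    using fin ne by (intro Min_in) auto
  then obtain v0 where v0: "v0 \<in> V" "degree E v0 = \<delta>" by auto
  have ec: "edge_connected V E \<delta>"
    unfolding edge_connected_def graph_connected_def
  proof (intro conjI allI impI ballI)
    fix F u v assume "F \<subseteq> E \<and> finite F \<and> card F < \<delta>" "u \<in> V" "v \<in> V"
    then show "(\<lambda>x y. {x,y} \<in> E - F)\<^sup>*\<^sup>* u v" using R[of u v] unfolding Rel_def \<delta>_def by simp
  qed (rule True)
  have up: "l \<le> \<delta>" if "edge_connected V E l" for l
  proof (rule ccontr)
    assume A: "\<not> l \<le> \<delta>"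
    define F where "F = {e\<in>E. v0 \<in> e}"
    have F1: "F \<subseteq> E" "finite F" using finE unfolding F_def by auto
    have F2: "card F < l" using v0 A unfolding F_def degree_def by simp
    have gc: "graph_connected V (E - F)" using that F1 F2 unfolding edge_connected_def by simp
    have "\<not> V \<subseteq> {v0}" using True card_mono[of "{v0}" V] by auto
    then obtain v1 where v1: "v1 \<in> V" "v1 \<noteq> v0" by auto
    have "(\<lambda>x y. {x,y} \<in> E - F)\<^sup>*\<^sup>* v0 v1" using gc v0 v1 unfolding graph_connected_def by simp
    then show False
    proof (cases rule: converse_rtranclpE)
      case base then show False using v1 by simp
    next
      case (step y)
      then have "{v0,y} \<in> E" "{v0,y} \<notin> F" by auto
      then show False unfolding F_def by simp
    qed
  qed
  have "(GREATEST l. edge_connected V E l) = \<delta>"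
    by (rule Greatest_equality) (rule ec, rule up)
  then show ?thesis using True unfolding edge_connectivity_def \<delta>_def by simp
qed



definition ind :: "bool \<Rightarrow> int" where "ind P = (if P then 1 else 0)"

lemma Amat_x: "q < k \<Longrightarrow> j < 4*k+2 \<Longrightarrow>
   Amat k q j * u j = (if j = q then u j else 0) + (if j = k + q then u j else 0) - (if j = 4*k then u j else 0)"
  unfolding Amat_def by auto

lemma Amat_z: "k \<le> q \<Longrightarrow> q < 2*k \<Longrightarrow> j < 4*k+2 \<Longrightarrow>
   Amat k q j * u j = (if j = k + q then u j else 0) + (if j = 2*k + q then u j else 0) - (if j = 4*k+1 then u j else 0)"
  unfolding Amat_def by auto

lemma Amat_l: "j < 4*k+2 \<Longrightarrow>
   Amat k (2*k) j * u j = (if j = 4*k then u j else 0) + (if j = 4*k+1 then u j else 0)"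
  unfolding Amat_def by auto

lemma row_x: "q < k \<Longrightarrow> (\<Sum>j<4*k+2. Amat k q j * u j) = u q + u (k+q) - u (4*k)"
proof -
  assume q: "q < k"
  have "(\<Sum>j<4*k+2. Amat k q j * u j) = (\<Sum>j<4*k+2. (if j = q then u j else 0) + (if j = k + q then u j else 0) - (if j = 4*k then u j else 0))"
    by (rule sum.cong) (use q Amat_x in auto)
  also have "\<dots> = u q + u (k+q) - u (4*k)"
    using q by (simp add: sum.distrib sum_subtractf)
  finally show ?thesis .
qed

lemma row_z: "k \<le> q \<Longrightarrow> q < 2*k \<Longrightarrow> (\<Sum>j<4*k+2. Amat k q j * u j) = u (k+q) + u (2*k+q) - u (4*k+1)"
proof -
  assume q: "k \<le> q" "q < 2*k"
  have "(\<Sum>j<4*k+2. Amat k q j * u j) = (\<Sum>j<4*k+2. (if j = k+q then u j else 0) + (if j = 2*k + q then u j else 0) - (if j = 4*k+1 then u j else 0))"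
    by (rule sum.cong) (use q Amat_z in auto)
  also have "\<dots> = u (k+q) + u (2*k+q) - u (4*k+1)"
    using q by (simp add: sum.distrib sum_subtractf)
  finally show ?thesis .
qed

lemma row_l: "(\<Sum>j<4*k+2. Amat k (2*k) j * u j) = u (4*k) + u (4*k+1)"
proof -
  have "(\<Sum>j<4*k+2. Amat k (2*k) j * u j) = (\<Sum>j<4*k+2. (if j = 4*k then u j else 0) + (if j = 4*k+1 then u j else 0))"
    by (rule sum.cong) (use Amat_l in auto)
  also have "\<dots> = u (4*k) + u (4*k+1)"
    by (simp add: sum.distrib)
  finally show ?thesis .
qed


locale LK =
  fixes k :: nat and b :: "nat \<Rightarrow> int"
  assumes k1: "1 \<le> k" and bZ: "b \<in> Zvec (2*k+1)"
begin

definition pa :: "nat \<Rightarrow> nat" where "pa p = (if p < k then p else k + p)"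
definition wd :: "nat \<Rightarrow> int \<Rightarrow> int" where "wd p s = (if p < k then b p + s else b p + b (2*k) - s)"
definition sg :: "nat \<Rightarrow> int" where "sg p = (if p < k then 1 else -1)"

abbreviation "FB \<equiv> fiber (Amat k) (2*k+1) (4*k+2) b"
abbreviation "Gr \<equiv> graver (Amat k) (2*k+1) (4*k+2)"
abbreviation "EE \<equiv> fiber_edges (Amat k) (2*k+1) (4*k+2) b Gr"

lemma pa_lt[simp]: "p < 2*k \<Longrightarrow> pa p < 4*k" "p < 2*k \<Longrightarrow> pa p + k < 4*k"
  unfolding pa_def by auto

lemma pa_ne4[simp]: "p < 2*k \<Longrightarrow> pa p \<noteq> 4*k" "p < 2*k \<Longrightarrow> pa p \<noteq> Suc (4*k)"
   "p < 2*k \<Longrightarrow> pa p + k \<noteq> 4*k" "p < 2*k \<Longrightarrow> pa p + k \<noteq> Suc (4*k)"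
  unfolding pa_def by auto

lemma pa_inj[simp]: "p < 2*k \<Longrightarrow> q < 2*k \<Longrightarrow> pa p = pa q \<longleftrightarrow> p = q"
  unfolding pa_def by auto

lemma pa_inj2[simp]: "p < 2*k \<Longrightarrow> q < 2*k \<Longrightarrow> pa p + k = pa q + k \<longleftrightarrow> p = q"
  unfolding pa_def by auto

lemma pa_ne[simp]: "p < 2*k \<Longrightarrow> q < 2*k \<Longrightarrow> pa p \<noteq> pa q + k" "p < 2*k \<Longrightarrow> q < 2*k \<Longrightarrow> pa q + k \<noteq> pa p"
  unfolding pa_def by auto

lemma pa_cover: "j < 4*k \<Longrightarrow> \<exists>q<2*k. j = pa q \<or> j = pa q + k"
proof -
  assume j: "j < 4*k"
  consider "j < k" | "k \<le> j" "j < 2*k" | "2*k \<le> j" "j < 3*k" | "3*k \<le> j" by linarith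
  then show ?thesis
  proof cases
    case 1 then show ?thesis by (intro exI[of _ j]) (auto simp: pa_def)
  next
    case 2 then show ?thesis by (intro exI[of _ "j-k"]) (auto simp: pa_def)
  next
    case 3 then show ?thesis by (intro exI[of _ "j-k"]) (auto simp: pa_def)
  next
    case 4 then show ?thesis using j by (intro exI[of _ "j-2*k"]) (auto simp: pa_def)
  qed
qed

lemma vec_eqI:
  assumes "\<And>q. q < 2*k \<Longrightarrow> f (pa q) = g (pa q)" "\<And>q. q < 2*k \<Longrightarrow> f (pa q + k) = g (pa q + k)"
    "f (4*k) = g (4*k)" "f (Suc (4*k)) = g (Suc (4*k))" "\<And>j. 4*k+2 \<le> j \<Longrightarrow> f j = g j"
  shows "f = g"
proof
  fix j
  consider "j < 4*k" | "j = 4*k" | "j = Suc (4*k)" | "4*k+2 \<le> j" by linarith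
  then show "f j = g j"
  proof cases
    case 1 then show ?thesis using pa_cover assms by blast
  qed (use assms in auto)
qed

lemma all_coordsI:
  assumes "\<And>q. q < 2*k \<Longrightarrow> P (pa q)" "\<And>q. q < 2*k \<Longrightarrow> P (pa q + k)" "P (4*k)" "P (Suc (4*k))"
  shows "\<forall>j<4*k+2. P j"
proof (intro allI impI)
  fix j assume "j < 4*k+2"
  then consider "j < 4*k" | "j = 4*k" | "j = Suc (4*k)" by linarith
  then show "P j"
  proof cases
    case 1 then show ?thesis using pa_cover assms by blast
  qed (use assms in auto)
qed

lemma mv_eq: "mat_vec (Amat k) (2*k+1) (4*k+2) u = c \<longleftrightarrow>
   (\<forall>q<2*k. u (pa q) + u (pa q + k) - u (if q < k then 4*k else Suc (4*k)) = c q) \<and>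
   u (4*k) + u (Suc (4*k)) = c (2*k) \<and> (\<forall>i\<ge>2*k+1. c i = 0)"
proof -
  have r: "(\<Sum>j<4*k+2. Amat k q j * u j) = u (pa q) + u (pa q + k) - u (if q < k then 4*k else Suc (4*k))"
    if "q < 2*k" for q
  proof (cases "q < k")
    case True
    then have e1: "pa q + k = k + q" "pa q = q" "(if q < k then 4*k else Suc (4*k)) = 4*k" by (auto simp: pa_def)
    show ?thesis unfolding e1(1) unfolding e1(2) e1(3) by (rule row_x) (use True in auto)
  next
    case False
    then have e1: "pa q + k = 2*k + q" "pa q = k + q" "(if q < k then 4*k else Suc (4*k)) = 4*k+1" by (auto simp: pa_def)
    show ?thesis unfolding e1(1) unfolding e1(2) e1(3) by (rule row_z) (use False that in auto)
  qed
  show ?thesis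
  proof
    assume A: "mat_vec (Amat k) (2*k+1) (4*k+2) u = c"
    have "c i = (if i < 2*k+1 then (\<Sum>j<4*k+2. Amat k i j * u j) else 0)" for i
      using A[symmetric] unfolding mat_vec_def by simp
    then show "(\<forall>q<2*k. u (pa q) + u (pa q + k) - u (if q < k then 4*k else Suc (4*k)) = c q) \<and>
      u (4*k) + u (Suc (4*k)) = c (2*k) \<and> (\<forall>i\<ge>2*k+1. c i = 0)"
      using r row_l[of k u] by auto
  next
    assume A: "(\<forall>q<2*k. u (pa q) + u (pa q + k) - u (if q < k then 4*k else Suc (4*k)) = c q) \<and>
      u (4*k) + u (Suc (4*k)) = c (2*k) \<and> (\<forall>i\<ge>2*k+1. c i = 0)"
    show "mat_vec (Amat k) (2*k+1) (4*k+2) u = c"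
    proof
      fix i
      consider "i < 2*k" | "i = 2*k" | "i \<ge> 2*k+1" by linarith
      then show "mat_vec (Amat k) (2*k+1) (4*k+2) u i = c i"
        unfolding mat_vec_def using A r row_l[of k u] by cases auto
    qed
  qed
qed

lemma fiber_iff: "u \<in> FB \<longleftrightarrow> u \<in> Zvec (4*k+2) \<and> (\<forall>j<4*k+2. 0 \<le> u j) \<and>
   u (Suc (4*k)) = b (2*k) - u (4*k) \<and> (\<forall>q<2*k. u (pa q) + u (pa q + k) = wd q (u (4*k)))"
proof -
  have bz: "\<forall>i\<ge>2*k+1. b i = 0" using bZ unfolding Zvec_def by auto
  show ?thesis
    unfolding fiber_def mv_eq using bz
    by (auto simp: wd_def algebra_simps)
qed


lemma ker_iff: "g \<in> int_kernel (Amat k) (2*k+1) (4*k+2) \<longleftrightarrow> g \<in> Zvec (4*k+2) \<and>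
   g (Suc (4*k)) = - g (4*k) \<and> (\<forall>q<2*k. g (pa q) + g (pa q + k) = sg q * g (4*k))"
  unfolding int_kernel_def mv_eq by (auto simp: sg_def algebra_simps)

definition M :: "nat \<Rightarrow> int \<Rightarrow> nat \<Rightarrow> int" where
  "M p \<sigma> = (\<lambda>j. if j = pa p then \<sigma> else if j = pa p + k then -\<sigma> else 0)"

definition upv :: "nat set \<Rightarrow> nat \<Rightarrow> int" where
  "upv C = (\<lambda>j. if j < k then ind (j \<in> C) else if j < 2*k then ind (j - k \<notin> C)
     else if j < 3*k then - ind (j - k \<in> C) else if j < 4*k then - ind (j - 2*k \<notin> C)
     else if j = 4*k then 1 else if j = Suc (4*k) then -1 else 0)"

lemma M_pa[simp]: "p < 2*k \<Longrightarrow> q < 2*k \<Longrightarrow> M p \<sigma> (pa q) = (if q = p then \<sigma> else 0)"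
  "p < 2*k \<Longrightarrow> q < 2*k \<Longrightarrow> M p \<sigma> (pa q + k) = (if q = p then -\<sigma> else 0)"
  "p < 2*k \<Longrightarrow> M p \<sigma> (4*k) = 0" "p < 2*k \<Longrightarrow> M p \<sigma> (Suc (4*k)) = 0"
  "p < 2*k \<Longrightarrow> 4*k+2 \<le> j \<Longrightarrow> M p \<sigma> j = 0"
  unfolding M_def pa_def by auto

lemma upv_pa[simp]: "q < 2*k \<Longrightarrow> upv C (pa q) = sg q * ind (q \<in> C)"
  "q < 2*k \<Longrightarrow> upv C (pa q + k) = sg q * ind (q \<notin> C)"
  "upv C (4*k) = 1" "upv C (Suc (4*k)) = -1" "4*k+2 \<le> j \<Longrightarrow> upv C j = 0"
  unfolding upv_def pa_def sg_def by auto

lemma ind_simps[simp]: "ind True = 1" "ind False = 0" by (auto simp: ind_def)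

lemma conf_01: "conformal u v \<Longrightarrow> \<bar>v i\<bar> \<le> 1 \<Longrightarrow> u i = 0 \<or> u i = v i"
proof -
  assume c: "conformal u v" "\<bar>v i\<bar> \<le> 1"
  then have "0 \<le> u i * v i" "\<bar>u i\<bar> \<le> \<bar>v i\<bar>" unfolding conformal_def by auto
  with c(2) show ?thesis
    by (cases "v i = 0"; cases "v i = 1"; cases "v i = -1") (auto simp: abs_le_iff mult_le_0_iff zero_le_mult_iff)
qed

lemma M_ker: "p < 2*k \<Longrightarrow> M p \<sigma> \<in> int_kernel (Amat k) (2*k+1) (4*k+2)"
  unfolding ker_iff Zvec_def by auto

lemma upv_ker: "upv C \<in> int_kernel (Amat k) (2*k+1) (4*k+2)"
  unfolding ker_iff Zvec_def by (auto simp: ind_def sg_def)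

lemma ker_Z: "g \<in> int_kernel (Amat k) (2*k+1) (4*k+2) \<Longrightarrow> j \<ge> 4*k+2 \<Longrightarrow> g j = 0"
  unfolding ker_iff Zvec_def by auto

lemma M_gr: assumes p: "p < 2*k" and s: "\<sigma> = 1 \<or> \<sigma> = -1" shows "M p \<sigma> \<in> Gr"
proof -
  have nz: "M p \<sigma> \<noteq> (\<lambda>_. 0)"
  proof
    assume "M p \<sigma> = (\<lambda>_. 0)"
    then have "M p \<sigma> (pa p) = 0" by simp
    then show False using p s by simp
  qed
  have "u = M p \<sigma>" if u: "u \<in> int_kernel (Amat k) (2*k+1) (4*k+2)" "u \<noteq> (\<lambda>_. 0)" "conformal u (M p \<sigma>)" for u
  proof -
    have ab: "\<bar>M p \<sigma> i\<bar> \<le> 1" for i using s unfolding M_def by auto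
    have z: "u i = 0" if "M p \<sigma> i = 0" for i using conf_01[OF u(3) ab, of i] that by auto
    have u4: "u (4*k) = 0" "u (Suc (4*k)) = 0" using z p by auto
    have uq: "u (pa q) = 0" "u (pa q + k) = 0" if "q < 2*k" "q \<noteq> p" for q using z p that by auto
    have sum: "u (pa p) + u (pa p + k) = 0" using u(1) u4 p unfolding ker_iff by auto
    have "u (pa p) \<noteq> 0"
    proof
      assume h: "u (pa p) = 0"
      then have "u (pa p + k) = 0" using sum by simp
      have "u = (\<lambda>_. 0)"
        by (rule vec_eqI) (use h \<open>u (pa p + k) = 0\<close> uq u4 ker_Z[OF u(1)] in auto)
      then show False using u(2) by simp
    qed
    then have "u (pa p) = \<sigma>" using conf_01[OF u(3) ab, of "pa p"] p by simp
    then have "u (pa p + k) = -\<sigma>" using sum by simp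
    show "u = M p \<sigma>"
      by (rule vec_eqI) (use \<open>u (pa p) = \<sigma>\<close> \<open>u (pa p + k) = -\<sigma>\<close> uq u4 ker_Z[OF u(1)] p in auto)
  qed
  then show ?thesis unfolding graver_def using M_ker[OF p] nz by auto
qed

lemma upv_gr: "upv C \<in> Gr"
proof -
  have nz: "upv C \<noteq> (\<lambda>_. 0)"
  proof
    assume "upv C = (\<lambda>_. 0)"
    then have "upv C (4*k) = 0" by simp
    then show False by simp
  qed
  have "u = upv C" if u: "u \<in> int_kernel (Amat k) (2*k+1) (4*k+2)" "u \<noteq> (\<lambda>_. 0)" "conformal u (upv C)" for u
  proof -
    have ab: "\<bar>upv C i\<bar> \<le> 1" for i unfolding upv_def ind_def by auto
    have c01: "u i = 0 \<or> u i = upv C i" for i using conf_01[OF u(3) ab] .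
    have ker: "u (Suc (4*k)) = - u (4*k)" "\<And>q. q < 2*k \<Longrightarrow> u (pa q) + u (pa q + k) = sg q * u (4*k)"
      using u(1) unfolding ker_iff by auto
    have sgq: "sg q \<noteq> 0" for q by (simp add: sg_def)
    consider "u (4*k) = 0" | "u (4*k) = 1" using c01[of "4*k"] by auto
    then show ?thesis
    proof cases
      case 1
      have pq: "u (pa q) = 0 \<and> u (pa q + k) = 0" if q: "q < 2*k" for q
      proof -
        have "u (pa q) + u (pa q + k) = 0" using ker(2)[OF q] 1 by simp
        then show ?thesis using c01[of "pa q"] c01[of "pa q + k"] q sgq[of q]
          by (cases "q \<in> C") auto
      qed
      have "u = (\<lambda>_. 0)"
        by (rule vec_eqI) (use pq 1 ker(1) ker_Z[OF u(1)] in auto)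
      then show ?thesis using u(2) by simp
    next
      case 2
      have pq: "u (pa q) = upv C (pa q) \<and> u (pa q + k) = upv C (pa q + k)" if q: "q < 2*k" for q
      proof -
        have "u (pa q) + u (pa q + k) = sg q" using ker(2)[OF q] 2 by simp
        then show ?thesis using c01[of "pa q"] c01[of "pa q + k"] q sgq[of q]
          by (cases "q \<in> C") auto
      qed
      show ?thesis
        by (rule vec_eqI) (use pq 2 ker(1) ker_Z[OF u(1)] in auto)
    qed
  qed
  then show ?thesis unfolding graver_def using upv_ker nz by auto
qed


lemma gr_D: "g \<in> Gr \<Longrightarrow> g \<in> int_kernel (Amat k) (2*k+1) (4*k+2) \<and> g \<noteq> (\<lambda>_. 0) \<and>
   (\<forall>u\<in>int_kernel (Amat k) (2*k+1) (4*k+2) - {\<lambda>_. 0}. conformal u g \<longrightarrow> u = g)"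
  unfolding graver_def by auto

lemma neg_ker: "g \<in> int_kernel (Amat k) (2*k+1) (4*k+2) \<Longrightarrow> (\<lambda>j. - g j) \<in> int_kernel (Amat k) (2*k+1) (4*k+2)"
  unfolding ker_iff Zvec_def by (auto simp: algebra_simps)

lemma gr_neg: assumes g: "g \<in> Gr" shows "(\<lambda>j. - g j) \<in> Gr"
proof -
  note G = gr_D[OF g]
  have nz: "(\<lambda>j. - g j) \<noteq> (\<lambda>_. 0)"
  proof
    assume "(\<lambda>j. - g j) = (\<lambda>_. 0)"
    then have "g = (\<lambda>_. 0)" by (auto simp: fun_eq_iff)
    then show False using G by simp
  qed
  have "u = (\<lambda>j. - g j)" if u: "u \<in> int_kernel (Amat k) (2*k+1) (4*k+2)" "u \<noteq> (\<lambda>_. 0)" "conformal u (\<lambda>j. - g j)" for u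
  proof -
    have "(\<lambda>j. - u j) \<in> int_kernel (Amat k) (2*k+1) (4*k+2)" using neg_ker[OF u(1)] .
    moreover have "(\<lambda>j. - u j) \<noteq> (\<lambda>_. 0)"
    proof
      assume "(\<lambda>j. - u j) = (\<lambda>_. 0)"
      then have "u = (\<lambda>_. 0)" by (auto simp: fun_eq_iff)
      then show False using u(2) by simp
    qed
    moreover have "conformal (\<lambda>j. - u j) g" using u(3) unfolding conformal_def by auto
    ultimately have h: "(\<lambda>j. - u j) = g" using G by auto
    show ?thesis
    proof
      fix x show "u x = - g x" using fun_cong[OF h, of x] by simp
    qed
  qed
  then show ?thesis unfolding graver_def using neg_ker G nz by auto
qed

lemma conf_allI:
  assumes "\<And>q. q < 2*k \<Longrightarrow> P (pa q)" "\<And>q. q < 2*k \<Longrightarrow> P (pa q + k)" "P (4*k)" "P (Suc (4*k))"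
    "\<And>j. 4*k+2 \<le> j \<Longrightarrow> P j"
  shows "P j"
proof (cases "j < 4*k+2")
  case True then show ?thesis using all_coordsI[of P, OF assms(1-4)] by blast
qed (use assms in auto)

lemma gr_zero: assumes g: "g \<in> Gr" "g (4*k) = 0"
  shows "\<exists>p<2*k. \<exists>\<sigma>. (\<sigma> = 1 \<or> \<sigma> = -1) \<and> g = M p \<sigma>"
proof -
  note G = gr_D[OF g(1)]
  have ker: "g (Suc (4*k)) = 0" "\<And>q. q < 2*k \<Longrightarrow> g (pa q) + g (pa q + k) = 0"
    using G g(2) unfolding ker_iff by auto
  obtain j where j: "g j \<noteq> 0" using G by (auto simp: fun_eq_iff)
  have "j < 4*k+2" using ker_Z[of g j] G j by (meson not_le)
  then have "j < 4*k" using ker g(2) j by (auto simp: less_Suc_eq)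
  then obtain q where q: "q < 2*k" "j = pa q \<or> j = pa q + k" using pa_cover by blast
  then have gq: "g (pa q) \<noteq> 0" using ker(2)[OF q(1)] j by auto
  define \<sigma> where "\<sigma> = (if g (pa q) > 0 then 1 else (-1::int))"
  have conf: "conformal (M q \<sigma>) g"
    unfolding conformal_def
  proof
    fix i
    show "0 \<le> M q \<sigma> i * g i \<and> \<bar>M q \<sigma> i\<bar> \<le> \<bar>g i\<bar>"
    proof (cases "i = pa q \<or> i = pa q + k")
      case True
      have "g (pa q + k) = - g (pa q)" using ker(2)[OF q(1)] by simp
      then show ?thesis using True gq q(1) unfolding \<sigma>_def
        by (auto simp: zero_le_mult_iff mult_le_0_iff)
    next
      case False
      then have "M q \<sigma> i = 0" unfolding M_def by auto
      then show ?thesis by simp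
    qed
  qed
  have "M q \<sigma> \<noteq> (\<lambda>_. 0)"
  proof
    assume "M q \<sigma> = (\<lambda>_. 0)"
    then have "M q \<sigma> (pa q) = 0" by simp
    then show False using q(1) unfolding \<sigma>_def by (simp split: if_splits)
  qed
  then have "M q \<sigma> = g" using G M_ker[OF q(1)] conf by auto
  moreover have "\<sigma> = 1 \<or> \<sigma> = -1" unfolding \<sigma>_def by auto
  ultimately show ?thesis using q(1) by (intro exI[of _ q]) auto
qed

lemma gr_pos: assumes g: "g \<in> Gr" "g (4*k) > 0"
  shows "\<exists>C. g = upv C"
proof -
  note G = gr_D[OF g(1)]
  define c where "c = g (4*k)"
  have ker: "g (Suc (4*k)) = - c" "\<And>q. q < 2*k \<Longrightarrow> g (pa q) + g (pa q + k) = sg q * c"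
    using G unfolding ker_iff c_def by auto
  define C where "C = {q. q < 2*k \<and> (if q < k then g (pa q) \<ge> 1 else g (pa q) \<le> -1)}"
  have conf: "conformal (upv C) g"
    unfolding conformal_def
  proof
    fix i
    show "0 \<le> upv C i * g i \<and> \<bar>upv C i\<bar> \<le> \<bar>g i\<bar>"
    proof (rule conf_allI[of "\<lambda>i. 0 \<le> upv C i * g i \<and> \<bar>upv C i\<bar> \<le> \<bar>g i\<bar>"])
      fix q assume q: "q < 2*k"
      show "0 \<le> upv C (pa q) * g (pa q) \<and> \<bar>upv C (pa q)\<bar> \<le> \<bar>g (pa q)\<bar>"
        using q g(2) by (auto simp: C_def sg_def ind_def)
      show "0 \<le> upv C (pa q + k) * g (pa q + k) \<and> \<bar>upv C (pa q + k)\<bar> \<le> \<bar>g (pa q + k)\<bar>"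
        using q g(2) ker(2)[OF q] by (auto simp: C_def sg_def ind_def c_def)
    qed (use g(2) ker(1) c_def in auto)
  qed
  have "upv C \<noteq> (\<lambda>_. 0)"
  proof
    assume "upv C = (\<lambda>_. 0)"
    then have "upv C (4*k) = 0" by simp
    then show False by simp
  qed
  then have "upv C = g" using G upv_ker conf by auto
  then show ?thesis by auto
qed

lemma gr_cases: assumes g: "g \<in> Gr"
  shows "(\<exists>p<2*k. \<exists>\<sigma>. (\<sigma> = 1 \<or> \<sigma> = -1) \<and> g = M p \<sigma>) \<or> (\<exists>C. g = upv C) \<or> (\<exists>C. g = (\<lambda>j. - upv C j))"
proof -
  consider "g (4*k) = 0" | "g (4*k) > 0" | "g (4*k) < 0" by linarith
  then show ?thesis
  proof cases
    case 1 then show ?thesis using gr_zero[OF g] by blast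
  next
    case 2 then show ?thesis using gr_pos[OF g] by blast
  next
    case 3
    then have "(\<lambda>j. - g j) (4*k) > 0" by simp
    then obtain C where h: "(\<lambda>j. - g j) = upv C" using gr_pos[OF gr_neg[OF g]] by blast
    have "g = (\<lambda>j. - upv C j)"
    proof
      fix x show "g x = - upv C x" using fun_cong[OF h, of x] by simp
    qed
    then show ?thesis by blast
  qed
qed

end



definition vp :: "(nat \<Rightarrow> int) \<Rightarrow> (nat \<Rightarrow> int) \<Rightarrow> nat \<Rightarrow> int" where "vp u g = (\<lambda>j. u j + g j)"
definition vm :: "(nat \<Rightarrow> int) \<Rightarrow> (nat \<Rightarrow> int) \<Rightarrow> nat \<Rightarrow> int" where "vm u g = (\<lambda>j. u j - g j)"
lemma vp_apply[simp]: "vp u g j = u j + g j" by (simp add: vp_def)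
lemma vm_apply[simp]: "vm u g j = u j - g j" by (simp add: vm_def)

context LK begin

lemma wd_shift: "wd q (s + t) = wd q s + sg q * t"
  unfolding wd_def sg_def by auto

lemma fib_add: assumes u: "u \<in> FB" and g: "g \<in> int_kernel (Amat k) (2*k+1) (4*k+2)"
  and nn: "\<forall>j<4*k+2. 0 \<le> u j + g j" shows "vp u g \<in> FB"
proof -
  have U: "u \<in> Zvec (4*k+2)" "u (Suc (4*k)) = b (2*k) - u (4*k)"
    "\<And>q. q<2*k \<Longrightarrow> u (pa q) + u (pa q + k) = wd q (u (4*k))" using u unfolding fiber_iff by auto
  have G: "g \<in> Zvec (4*k+2)" "g (Suc (4*k)) = - g (4*k)"
    "\<And>q. q<2*k \<Longrightarrow> g (pa q) + g (pa q + k) = sg q * g (4*k)" using g unfolding ker_iff by auto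
  have "vp u g \<in> Zvec (4*k+2)" using U(1) G(1) unfolding Zvec_def by simp
  moreover have "(vp u g) (Suc (4*k)) = b (2*k) - (vp u g) (4*k)" using U(2) G(2) by simp
  moreover have "(vp u g) (pa q) + (vp u g) (pa q + k) = wd q ((vp u g) (4*k))" if q: "q < 2*k" for q
  proof -
    have "(vp u g) (pa q) + (vp u g) (pa q + k) = (u (pa q) + u (pa q + k)) + (g (pa q) + g (pa q + k))"
      by simp
    also have "\<dots> = wd q (u (4*k)) + sg q * g (4*k)" using U(3)[OF q] G(3)[OF q] by simp
    also have "\<dots> = wd q ((vp u g) (4*k))" by (simp add: wd_shift)
    finally show ?thesis .
  qed
  ultimately show ?thesis using nn unfolding fiber_iff by auto
qed

lemma fib_sub: assumes u: "u \<in> FB" and g: "g \<in> int_kernel (Amat k) (2*k+1) (4*k+2)"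
  and nn: "\<forall>j<4*k+2. 0 \<le> u j - g j" shows "vm u g \<in> FB"
proof -
  have "vm u g = vp u (\<lambda>j. - g j)" by (auto simp: fun_eq_iff)
  then show ?thesis using fib_add[OF u neg_ker[OF g]] nn by simp
qed

lemma edgeI: assumes "x \<in> FB" "y \<in> FB" "g \<in> Gr" "\<And>i. y i = x i + g i" shows "{x,y} \<in> EE"
proof -
  have d: "(\<lambda>i. y i - x i) = g" using assms(4) by auto
  have "g \<noteq> (\<lambda>_. 0)" using gr_D[OF assms(3)] by simp
  then have "x \<noteq> y" using d by auto
  then show ?thesis unfolding fiber_edges_def using assms(1,2,3) d by blast
qed

lemma edgeD: assumes "{u,n} \<in> EE"
  shows "u \<in> FB \<and> n \<in> FB \<and> u \<noteq> n \<and> (\<lambda>i. n i - u i) \<in> Gr"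
proof -
  obtain x y where xy: "{u,n} = {x,y}" "x \<in> FB" "y \<in> FB" "x \<noteq> y"
    "(\<lambda>i. x i - y i) \<in> Gr \<or> (\<lambda>i. y i - x i) \<in> Gr"
    using assms unfolding fiber_edges_def by blast
  have g: "(\<lambda>i. x i - y i) \<in> Gr" "(\<lambda>i. y i - x i) \<in> Gr"
  proof -
    have a: "(\<lambda>j. - (\<lambda>i. x i - y i) j) = (\<lambda>i. y i - x i)" by auto
    have c: "(\<lambda>j. - (\<lambda>i. y i - x i) j) = (\<lambda>i. x i - y i)" by auto
    show "(\<lambda>i. x i - y i) \<in> Gr" "(\<lambda>i. y i - x i) \<in> Gr"
      using xy(5) gr_neg[of "\<lambda>i. x i - y i"] gr_neg[of "\<lambda>i. y i - x i"] a c by auto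
  qed
  from xy(1) have "(u = x \<and> n = y) \<or> (u = y \<and> n = x)" by (auto simp: doubleton_eq_iff)
  then show ?thesis using xy g by auto
qed

lemma edgeE_shape: "e \<in> EE \<Longrightarrow> \<exists>x y. e = {x,y} \<and> x \<noteq> y \<and> x \<in> FB \<and> y \<in> FB"
  unfolding fiber_edges_def by blast

definition Bd :: int where "Bd = (\<Sum>i<2*k+1. \<bar>b i\<bar>)"

lemma b_le: "i < 2*k+1 \<Longrightarrow> \<bar>b i\<bar> \<le> Bd"
  unfolding Bd_def by (rule member_le_sum) auto

lemma fib_bound: assumes u: "u \<in> FB" and j: "j < 4*k+2" shows "0 \<le> u j \<and> u j \<le> 2 * Bd"
proof -
  have F: "u \<in> Zvec (4*k+2)" "\<forall>j<4*k+2. 0 \<le> u j" "u (Suc (4*k)) = b (2*k) - u (4*k)"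
    "\<forall>q<2*k. u (pa q) + u (pa q + k) = wd q (u (4*k))" using u unfolding fiber_iff by auto
  have N: "\<bar>b (2*k)\<bar> \<le> Bd" using b_le by simp
  have z: "0 \<le> u (4*k)" "0 \<le> u (Suc (4*k))" using F(2) by auto
  have s: "u (4*k) \<le> 2*Bd" "u (Suc (4*k)) \<le> 2*Bd" using F(3) N z by (auto simp: abs_le_iff)
  have p: "u (pa q) \<le> 2*Bd \<and> u (pa q + k) \<le> 2*Bd" if q: "q < 2*k" for q
  proof -
    have "\<bar>b q\<bar> \<le> Bd" using b_le q by simp
    moreover have "pa q < 4*k+2" "pa q + k < 4*k+2" using pa_lt[OF q] by auto
    then have "0 \<le> u (pa q)" "0 \<le> u (pa q + k)" using F(2) by blast+
    moreover have "0 \<le> u (Suc (4*k))" using F(2) by auto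
    moreover have e: "u (pa q) + u (pa q + k) = wd q (u (4*k))" using F(4) q by blast
    ultimately show ?thesis using z q N F(3) unfolding wd_def by (auto simp: abs_le_iff split: if_splits)
  qed
  have "u j \<le> 2 * Bd" using all_coordsI[of "\<lambda>j. u j \<le> 2*Bd"] p s j by blast
  then show ?thesis using F(2) j by auto
qed

lemma fin_FB: "finite FB"
proof -
  define f where "f u = map u [0..<4*k+2]" for u :: "nat \<Rightarrow> int"
  have "inj_on f FB"
  proof (rule inj_onI)
    fix u v assume uv: "u \<in> FB" "v \<in> FB" "f u = f v"
    show "u = v"
    proof
      fix j show "u j = v j"
      proof (cases "j < 4*k+2")
        case True
        have "f u ! j = u j" "f v ! j = v j" using True unfolding f_def by (simp_all del: upt_Suc)
        then show ?thesis using uv(3) by metis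
      next
        case False
        then show ?thesis using uv unfolding fiber_iff Zvec_def by auto
      qed
    qed
  qed
  moreover have "f ` FB \<subseteq> {xs. set xs \<subseteq> {0..2*Bd} \<and> length xs = 4*k+2}"
    using fib_bound unfolding f_def by auto
  moreover have "finite {xs. set xs \<subseteq> {0..2*Bd} \<and> length xs = 4*k+2}"
    by (rule finite_lists_length_eq) simp
  ultimately show ?thesis by (meson finite_imageD finite_subset)
qed

definition lay :: "(nat \<Rightarrow> int) \<Rightarrow> int" where "lay u = u (4*k)"

lemma lay_M[simp]: "q < 2*k \<Longrightarrow> lay (vp u (M q \<sigma>)) = lay u"
  unfolding lay_def by simp
lemma lay_up[simp]: "lay (vp u (upv C)) = lay u + 1"
  unfolding lay_def by simp
lemma lay_dn[simp]: "lay (vm u (upv C)) = lay u - 1"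
  unfolding lay_def by simp

lemma fibD: "u \<in> FB \<Longrightarrow> (\<forall>j<4*k+2. 0 \<le> u j) \<and> u (Suc (4*k)) = b (2*k) - lay u \<and>
   (\<forall>q<2*k. u (pa q) + u (pa q + k) = wd q (lay u))"
  unfolding fiber_iff lay_def by auto

lemma fib_nn: "u \<in> FB \<Longrightarrow> q < 2*k \<Longrightarrow> 0 \<le> u (pa q) \<and> 0 \<le> u (pa q + k)"
proof -
  assume u: "u \<in> FB" and q: "q < 2*k"
  have "pa q < 4*k+2" "pa q + k < 4*k+2" using pa_lt[OF q] by auto
  then show ?thesis using fibD[OF u] by blast
qed

lemma mv_ok: assumes u: "u \<in> FB" and q: "q < 2*k" and c: "0 \<le> u (pa q) + \<sigma>" "0 \<le> u (pa q + k) - \<sigma>"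
  shows "vp u (M q \<sigma>) \<in> FB"
proof (rule fib_add[OF u M_ker[OF q]])
  show "\<forall>j<4*k+2. 0 \<le> u j + M q \<sigma> j"
  proof (rule all_coordsI)
    fix p assume p: "p < 2*k"
    show "0 \<le> u (pa p) + M q \<sigma> (pa p)" "0 \<le> u (pa p + k) + M q \<sigma> (pa p + k)"
      using fib_nn[OF u p] c p q by auto
  qed (use fibD[OF u] q in auto)
qed

definition tau :: "(nat \<Rightarrow> int) \<Rightarrow> nat \<Rightarrow> int" where "tau u q = (if u (pa q) \<ge> 1 then -1 else 1)"

lemma tau_pm: "tau u q = 1 \<or> tau u q = -1" unfolding tau_def by auto

lemma tau_ok: assumes u: "u \<in> FB" and q: "q < 2*k" and w: "wd q (lay u) \<ge> 1"
  shows "vp u (M q (tau u q)) \<in> FB"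
proof (rule mv_ok[OF u q])
  have "u (pa q) + u (pa q + k) = wd q (lay u)" using fibD[OF u] q by auto
  then show "0 \<le> u (pa q) + tau u q" "0 \<le> u (pa q + k) - tau u q"
    using fib_nn[OF u q] w unfolding tau_def by auto
qed

lemma dn_ok: assumes u: "u \<in> FB" and l: "lay u \<ge> 1"
  and c: "\<And>q. q < k \<Longrightarrow> (q \<in> C \<longrightarrow> u (pa q) \<ge> 1) \<and> (q \<notin> C \<longrightarrow> u (pa q + k) \<ge> 1)"
  shows "vm u (upv C) \<in> FB"
proof (rule fib_sub[OF u upv_ker])
  show "\<forall>j<4*k+2. 0 \<le> u j - upv C j"
  proof (rule all_coordsI)
    fix p assume p: "p < 2*k"
    show "0 \<le> u (pa p) - upv C (pa p)" "0 \<le> u (pa p + k) - upv C (pa p + k)"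
      using fib_nn[OF u p] c[of p] p by (auto simp: sg_def ind_def)
  qed (use fibD[OF u] l lay_def in auto)
qed

end

locale LK2 = LK +
  assumes ne: "FB \<noteq> {}"
begin

definition H :: int where "H = Max (lay ` FB)"
definition L :: int where "L = Min (lay ` FB)"

lemma H_ge: "u \<in> FB \<Longrightarrow> lay u \<le> H" unfolding H_def using fin_FB by auto
lemma L_le: "u \<in> FB \<Longrightarrow> L \<le> lay u" unfolding L_def using fin_FB by auto

lemma H_ex: "\<exists>v\<in>FB. lay v = H"
proof -
  have "H \<in> lay ` FB" unfolding H_def using fin_FB ne by (intro Max_in) auto
  then show ?thesis by auto
qed

lemma L_ex: "\<exists>v\<in>FB. lay v = L"
proof -
  have "L \<in> lay ` FB" unfolding L_def using fin_FB ne by (intro Min_in) auto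
  then show ?thesis by auto
qed

lemma NH: "b (2*k) - H \<ge> 0"
proof -
  obtain v where v: "v \<in> FB" "lay v = H" using H_ex by auto
  then show ?thesis using fibD[OF v(1)] by auto
qed

lemma L0: "L \<ge> 0"
proof -
  obtain v where v: "v \<in> FB" "lay v = L" using L_ex by auto
  have "4*k < 4*k+2" by simp
  then have "0 \<le> v (4*k)" using fibD[OF v(1)] by blast
  then show ?thesis using v(2) unfolding lay_def by simp
qed

lemma wdH: "q < 2*k \<Longrightarrow> wd q H \<ge> 0"
proof -
  assume q: "q < 2*k"
  obtain v where v: "v \<in> FB" "lay v = H" using H_ex by auto
  then show ?thesis using fibD[OF v(1)] fib_nn[OF v(1) q] q by force
qed

lemma wdL: "q < 2*k \<Longrightarrow> wd q L \<ge> 0"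
proof -
  assume q: "q < 2*k"
  obtain v where v: "v \<in> FB" "lay v = L" using L_ex by auto
  then show ?thesis using fibD[OF v(1)] fib_nn[OF v(1) q] q by force
qed

definition Bs :: "(nat \<Rightarrow> int) \<Rightarrow> nat set" where "Bs u = {q. k \<le> q \<and> q < 2*k \<and> u (pa q) \<ge> 1}"

lemma up_ok: assumes u: "u \<in> FB" and l: "lay u < H" and A: "A \<subseteq> {..<k}"
  shows "vp u (upv (A \<union> Bs u)) \<in> FB"
proof (rule fib_add[OF u upv_ker])
  have wz: "wd q (lay u) \<ge> 1" if "k \<le> q" "q < 2*k" for q
    using wdH[of q] that l unfolding wd_def by auto
  show "\<forall>j<4*k+2. 0 \<le> u j + upv (A \<union> Bs u) j"
  proof (rule all_coordsI)
    fix p assume p: "p < 2*k"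
    have e: "u (pa p) + u (pa p + k) = wd p (lay u)" using fibD[OF u] p by auto
    show "0 \<le> u (pa p) + upv (A \<union> Bs u) (pa p)" "0 \<le> u (pa p + k) + upv (A \<union> Bs u) (pa p + k)"
    proof -
      show "0 \<le> u (pa p) + upv (A \<union> Bs u) (pa p)"
        using fib_nn[OF u p] p A by (auto simp: sg_def ind_def Bs_def)
      show "0 \<le> u (pa p + k) + upv (A \<union> Bs u) (pa p + k)"
      proof (cases "p < k")
        case True then show ?thesis using fib_nn[OF u p] p by (auto simp: sg_def ind_def)
      next
        case False
        then have "p \<notin> A" using A by auto
        then show ?thesis using fib_nn[OF u p] p False e wz[of p] by (auto simp: sg_def ind_def Bs_def)
      qed
    qed
  qed (use fibD[OF u] l NH lay_def in auto)
qed

end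



context LK2 begin

definition NZ :: "nat set" where "NZ = {q. q < 2*k \<and> wd q H \<ge> 1}"
definition DnH :: bool where "DnH \<longleftrightarrow> H \<ge> 1 \<and> (\<forall>q<k. wd q H \<ge> 1)"

definition cor :: "nat \<Rightarrow> int" where
  "cor j = (if j < k then 0 else if j < 2*k then wd (j-k) H else if j < 3*k then 0
     else if j < 4*k then wd (j - 2*k) H else if j = 4*k then H else if j = Suc (4*k) then b (2*k) - H else 0)"

lemma cor_pa[simp]: "q < 2*k \<Longrightarrow> cor (pa q) = 0" "q < 2*k \<Longrightarrow> cor (pa q + k) = wd q H"
  "cor (4*k) = H" "cor (Suc (4*k)) = b (2*k) - H"
  unfolding cor_def pa_def by auto

lemma H0: "H \<ge> 0"
proof -
  obtain v where "v \<in> FB" "lay v = H" using H_ex by auto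
  then show ?thesis using L_le[of v] L0 by simp
qed

lemma cor_FB: "cor \<in> FB"
  unfolding fiber_iff
proof (intro conjI)
  show "cor \<in> Zvec (4*k+2)" unfolding Zvec_def cor_def by auto
  show "\<forall>j<4*k+2. 0 \<le> cor j"
    by (rule all_coordsI) (use wdH H0 NH in auto)
qed auto

lemma lay_cor[simp]: "lay cor = H" unfolding lay_def by simp

lemma mindeg_le: "u \<in> FB \<Longrightarrow> min_degree FB EE \<le> degree EE u"
  unfolding min_degree_def using fin_FB by auto

lemma upv_restrict: "upv C = upv (C \<inter> {k..<2*k})" if "C \<inter> {..<k} = {}"
proof (rule vec_eqI)
  fix q assume q: "q < 2*k"
  show "upv C (pa q) = upv (C \<inter> {k..<2*k}) (pa q)" "upv C (pa q + k) = upv (C \<inter> {k..<2*k}) (pa q + k)"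
    using q that by (auto simp: ind_def)
qed auto

lemma cor_deg: "degree EE cor \<le> card NZ + (if DnH then 2^k else 0)"
proof -
  define S1 where "S1 = (\<lambda>q. vp cor (M q 1)) ` NZ"
  define S2 where "S2 = (if DnH then (\<lambda>D. vm cor (upv D)) ` Pow {k..<2*k} else {})"
  have sub: "{e\<in>EE. cor \<in> e} \<subseteq> (\<lambda>n. {cor,n}) ` (S1 \<union> S2)"
  proof
    fix e assume e: "e \<in> {e\<in>EE. cor \<in> e}"
    then obtain x y where xy: "e = {x,y}" "x \<noteq> y" using edgeE_shape by blast
    then obtain n where en: "e = {cor, n}" using e by auto
    have D: "n \<in> FB" "(\<lambda>i. n i - cor i) \<in> Gr" using edgeD[of cor n] e en by auto
    have "n \<in> S1 \<union> S2"
    proof -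
      consider (a) p \<sigma> where "p < 2*k" "\<sigma> = 1 \<or> \<sigma> = -1" "(\<lambda>i. n i - cor i) = M p \<sigma>"
        | (b) C where "(\<lambda>i. n i - cor i) = upv C" | (c) C where "(\<lambda>i. n i - cor i) = (\<lambda>j. - upv C j)"
        using gr_cases[OF D(2)] by blast
      then show ?thesis
      proof cases
        case a
        have nv: "n = vp cor (M p \<sigma>)"
        proof
          fix i show "n i = vp cor (M p \<sigma>) i" using fun_cong[OF a(3), of i] by simp
        qed
        have "0 \<le> n (pa p)" "0 \<le> n (pa p + k)" using fib_nn[OF D(1) a(1)] by auto
        then have "\<sigma> = 1" "wd p H \<ge> 1" using a(1,2) nv by auto
        then show ?thesis unfolding S1_def NZ_def using nv a(1) by auto
      next
        case b
        have "lay n = H + 1" using fun_cong[OF b, of "4*k"] unfolding lay_def by simp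
        then show ?thesis using H_ge[OF D(1)] by simp
      next
        case c
        have nv: "n = vm cor (upv C)"
        proof
          fix i show "n i = vm cor (upv C) i" using fun_cong[OF c, of i] by simp
        qed
        have "lay n = H - 1" using nv by simp
        then have H1: "H \<ge> 1" using L_le[OF D(1)] L0 by simp
        have x: "q \<notin> C \<and> wd q H \<ge> 1" if q: "q < k" for q
        proof -
          have q2: "q < 2*k" using q by simp
          have "0 \<le> n (pa q)" "0 \<le> n (pa q + k)" using fib_nn[OF D(1) q2] by auto
          then show ?thesis using nv q q2 by (auto simp: sg_def ind_def split: if_splits)
        qed
        then have "DnH" unfolding DnH_def using H1 by auto
        moreover have "C \<inter> {..<k} = {}" using x by auto
        then have "upv C = upv (C \<inter> {k..<2*k})" by (rule upv_restrict)
        ultimately show ?thesis unfolding S2_def using nv by auto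
      qed
    qed
    then show "e \<in> (\<lambda>n. {cor,n}) ` (S1 \<union> S2)" using en by auto
  qed
  have fin1: "finite S1" unfolding S1_def NZ_def by auto
  have fin2: "finite S2" unfolding S2_def by auto
  have "degree EE cor \<le> card ((\<lambda>n. {cor,n}) ` (S1 \<union> S2))"
    unfolding degree_def using sub fin1 fin2 by (intro card_mono) auto
  also have "\<dots> \<le> card (S1 \<union> S2)" by (rule card_image_le) (use fin1 fin2 in auto)
  also have "\<dots> \<le> card S1 + card S2" by (rule card_Un_le)
  also have "card S1 \<le> card NZ" unfolding S1_def by (rule card_image_le) (auto simp: NZ_def)
  also have "card S2 \<le> (if DnH then 2^k else 0)"
  proof (cases DnH)
    case True
    have "card S2 \<le> card (Pow {k..<2*k})" unfolding S2_def using True by (simp add: card_image_le)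
    also have "\<dots> = 2^k" by (simp add: card_Pow)
    finally show ?thesis using True by simp
  qed (simp add: S2_def)
  finally show ?thesis by simp
qed

lemma delta_le: "min_degree FB EE \<le> card NZ + (if DnH then 2^k else 0)"
  using mindeg_le[OF cor_FB] cor_deg by linarith

definition nbrs :: "(nat \<Rightarrow> int) \<Rightarrow> (nat \<Rightarrow> int) set" where "nbrs u = {n. {u,n} \<in> EE}"

lemma degree_nbrs: "degree EE u = card (nbrs u)"
proof -
  have "{e\<in>EE. u \<in> e} = (\<lambda>n. {u,n}) ` nbrs u"
  proof
    show "{e\<in>EE. u \<in> e} \<subseteq> (\<lambda>n. {u,n}) ` nbrs u"
    proof
      fix e assume e: "e \<in> {e\<in>EE. u \<in> e}"
      then obtain x y where xy: "e = {x,y}" using edgeE_shape by blast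
      then obtain n where "e = {u,n}" using e by auto
      then show "e \<in> (\<lambda>n. {u,n}) ` nbrs u" using e unfolding nbrs_def by auto
    qed
  qed (auto simp: nbrs_def)
  moreover have "inj_on (\<lambda>n. {u,n}) (nbrs u)"
    by (rule inj_onI) (auto simp: doubleton_eq_iff)
  ultimately show ?thesis unfolding degree_def by (simp add: card_image)
qed

lemma fin_nbrs: "finite (nbrs u)"
proof -
  have "nbrs u \<subseteq> FB" unfolding nbrs_def using edgeD by blast
  then show ?thesis using fin_FB finite_subset by blast
qed

end


lemma wedges_sub: "e \<in> wedges p \<Longrightarrow> e \<subseteq> set p"
  by (induction p rule: wedges.induct) auto

lemma sep_disj: assumes "\<And>e. e \<in> wedges P \<Longrightarrow> \<exists>x\<in>e. Q x" "\<And>x. x \<in> set R \<Longrightarrow> \<not> Q x"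
  shows "wedges P \<inter> wedges R = {}"
proof (rule ccontr)
  assume "wedges P \<inter> wedges R \<noteq> {}"
  then obtain e where "e \<in> wedges P" "e \<in> wedges R" by auto
  then show False using assms wedges_sub by blast
qed

context LK2 begin

abbreviation "dd \<equiv> min_degree FB EE"

lemma edgeI': "x \<in> FB \<Longrightarrow> y \<in> FB \<Longrightarrow> g \<in> Gr \<Longrightarrow> (\<And>i. y i = x i + g i) \<Longrightarrow> {y,x} \<in> EE"
  using edgeI by (simp add: insert_commute)

lemma card_NZ: "card NZ \<le> 2*k"
proof -
  have "NZ \<subseteq> {..<2*k}" unfolding NZ_def by auto
  then show ?thesis using card_mono[of "{..<2*k}" NZ] by simp
qed

lemma mid_step:
  assumes u: "u \<in> FB" and l: "L < lay u" "lay u < H"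
    and IH: "\<And>w. w \<in> FB \<Longrightarrow> lay w = lay u + 1 \<Longrightarrow> Rel EE dd w v0"
  shows "Rel EE dd u v0"
proof -
  define s where "s = lay u"
  have wd1: "wd q s \<ge> 1" if "q < 2*k" for q
    using wdL[OF that] wdH[OF that] l unfolding s_def wd_def by auto
  define a where "a A = vp u (upv (A \<union> Bs u))" for A
  define n where "n q = vp u (M q (tau u q))" for q
  define m where "m q = vp (n q) (upv (Bs (n q)))" for q
  have aF: "a A \<in> FB" "lay (a A) = s + 1" "{u, a A} \<in> EE" if "A \<subseteq> {..<k}" for A
  proof -
    show "a A \<in> FB" unfolding a_def by (rule up_ok[OF u l(2) that])
    then show "{u, a A} \<in> EE" by (intro edgeI[OF u _ upv_gr]) (auto simp: a_def)
  qed (simp add: a_def s_def)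
  have nF: "n q \<in> FB" "lay (n q) = s" "n q \<noteq> u" "{u, n q} \<in> EE" if q: "q < 2*k" for q
  proof -
    show nq: "n q \<in> FB" unfolding n_def by (rule tau_ok[OF u q]) (use wd1[OF q] s_def in simp)
    show "lay (n q) = s" using q unfolding n_def s_def by simp
    show "n q \<noteq> u"
    proof
      assume "n q = u"
      then have "n q (pa q) = u (pa q)" by simp
      then show False using q tau_pm[of u q] unfolding n_def by auto
    qed
    show "{u, n q} \<in> EE" by (rule edgeI[OF u nq M_gr[OF q tau_pm]]) (simp add: n_def)
  qed
  have mF: "m q \<in> FB" "lay (m q) = s + 1" "{n q, m q} \<in> EE" if q: "q < 2*k" for q
  proof -
    have "vp (n q) (upv ({} \<union> Bs (n q))) \<in> FB" by (rule up_ok) (use nF[OF q] l s_def in auto)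
    then show mq: "m q \<in> FB" unfolding m_def by simp
    show "lay (m q) = s + 1" using nF[OF q] unfolding m_def by simp
    show "{n q, m q} \<in> EE" by (rule edgeI[OF nF(1)[OF q] mq upv_gr]) (simp add: m_def)
  qed
  define W1 where "W1 = (\<lambda>A. [u, a A]) ` Pow {..<k}"
  define W2 where "W2 = (\<lambda>q. [u, n q, m q]) ` {..<2*k}"
  have inj1: "inj_on (\<lambda>A. [u, a A]) (Pow {..<k})"
  proof (rule inj_onI)
    fix A A' assume AA: "A \<in> Pow {..<k}" "A' \<in> Pow {..<k}" "[u, a A] = [u, a A']"
    have "q \<in> A \<longleftrightarrow> q \<in> A'" if q: "q < k" for q
    proof -
      have "a A (pa q) = a A' (pa q)" using AA by simp
      then show ?thesis using q unfolding a_def Bs_def by (auto simp: sg_def ind_def split: if_splits)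
    qed
    then show "A = A'" using AA(1,2) by auto
  qed
  have ninj: "q = q'" if qq: "q < 2*k" "q' < 2*k" "n q = n q'" for q q'
  proof -
    have e: "u (pa q) + tau u q = u (pa q) + (if q = q' then tau u q' else 0)"
      using fun_cong[OF qq(3), of "pa q"] qq by (simp add: n_def)
    show "q = q'"
    proof (rule ccontr)
      assume "q \<noteq> q'" then show False using e tau_pm[of u q] by auto
    qed
  qed
  have inj2: "inj_on (\<lambda>q. [u, n q, m q]) {..<2*k}"
    by (rule inj_onI) (use ninj in auto)
  have c1: "card W1 = 2^k" unfolding W1_def using inj1 by (simp add: card_image card_Pow)
  have c2: "card W2 = 2*k" unfolding W2_def using inj2 by (simp add: card_image)
  have d12: "W1 \<inter> W2 = {}" unfolding W1_def W2_def by auto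
  have cW: "card (W1 \<union> W2) = 2^k + 2*k"
    using c1 c2 d12 unfolding W1_def W2_def by (simp add: card_Un_disjoint)
  have ddc: "dd \<le> card (W1 \<union> W2)" using delta_le card_NZ cW by (auto split: if_splits)
  show ?thesis
  proof (rule Rel_family[OF _ ddc])
    show "finite (W1 \<union> W2)" unfolding W1_def W2_def by auto
  next
    fix P assume "P \<in> W1 \<union> W2"
    then show "P \<noteq> [] \<and> hd P = u \<and> walk EE P \<and> Rel EE dd (last P) v0"
    proof
      assume "P \<in> W1"
      then obtain A where A: "A \<subseteq> {..<k}" "P = [u, a A]" unfolding W1_def by auto
      then show ?thesis using aF[OF A(1)] IH s_def by auto
    next
      assume "P \<in> W2"
      then obtain q where q: "q < 2*k" "P = [u, n q, m q]" unfolding W2_def by auto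
      then show ?thesis using nF[OF q(1)] mF[OF q(1)] IH s_def by auto
    qed
  next
    fix P Q assume PQ: "P \<in> W1 \<union> W2" "Q \<in> W1 \<union> W2" "P \<noteq> Q"
    show "wedges P \<inter> wedges Q = {}"
    proof (cases "P \<in> W1")
      case P1: True
      then obtain A where A: "A \<subseteq> {..<k}" "P = [u, a A]" unfolding W1_def by auto
      show ?thesis
      proof (cases "Q \<in> W1")
        case True
        then obtain A' where A': "A' \<subseteq> {..<k}" "Q = [u, a A']" unfolding W1_def by auto
        then show ?thesis using A PQ(3) by (auto simp: doubleton_eq_iff)
      next
        case False
        then obtain q where q: "q < 2*k" "Q = [u, n q, m q]" using PQ(2) unfolding W2_def by auto
        show ?thesis using A q aF[OF A(1)] nF[OF q(1)] mF[OF q(1)]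
          by (auto simp: doubleton_eq_iff)
      qed
    next
      case P2: False
      then obtain q where q: "q < 2*k" "P = [u, n q, m q]" using PQ(1) unfolding W2_def by auto
      show ?thesis
      proof (cases "Q \<in> W1")
        case True
        then obtain A where A: "A \<subseteq> {..<k}" "Q = [u, a A]" unfolding W1_def by auto
        show ?thesis using A q aF[OF A(1)] nF[OF q(1)] mF[OF q(1)]
          by (auto simp: doubleton_eq_iff)
      next
        case False
        then obtain q' where q': "q' < 2*k" "Q = [u, n q', m q']" using PQ(2) unfolding W2_def by auto
        have "q \<noteq> q'" using PQ(3) q q' by auto
        then have "n q \<noteq> n q'" using ninj q q' by blast
        then show ?thesis using q q' nF[OF q(1)] mF[OF q(1)] nF[OF q'(1)] mF[OF q'(1)]
          by (auto simp: doubleton_eq_iff)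
      qed
    qed
  qed
qed


lemma nb_lay: assumes "{u,n} \<in> EE" shows "lay n = lay u \<or> lay n = lay u + 1 \<or> lay n = lay u - 1"
proof -
  have D: "(\<lambda>i. n i - u i) \<in> Gr" using edgeD[OF assms] by auto
  have e: "lay n = lay u + (\<lambda>i. n i - u i) (4*k)" unfolding lay_def by simp
  consider (a) p \<sigma> where "p < 2*k" "(\<lambda>i. n i - u i) = M p \<sigma>"
        | (b) C where "(\<lambda>i. n i - u i) = upv C" | (c) C where "(\<lambda>i. n i - u i) = (\<lambda>j. - upv C j)"
    using gr_cases[OF D] by blast
  then show ?thesis
  proof cases
    case a
    then have "n (4*k) - u (4*k) = 0" using fun_cong[OF a(2), of "4*k"] by simp
    then show ?thesis unfolding lay_def by simp
  next
    case b
    then have "n (4*k) - u (4*k) = 1" using fun_cong[OF b, of "4*k"] by simp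
    then show ?thesis unfolding lay_def by simp
  next
    case c
    then have "n (4*k) - u (4*k) = -1" using fun_cong[OF c, of "4*k"] by simp
    then show ?thesis unfolding lay_def by simp
  qed
qed

lemma bot_step:
  assumes u: "u \<in> FB" and l: "lay u = L" "L < H"
    and IH: "\<And>w. w \<in> FB \<Longrightarrow> lay w = lay u + 1 \<Longrightarrow> Rel EE dd w v0"
  shows "Rel EE dd u v0"
proof -
  define mm where "mm n = vp n (upv (Bs n))" for n
  define f where "f n = (if lay n = L + 1 then [u, n] else [u, n, mm n])" for n
  have nbF: "n \<in> FB \<and> n \<noteq> u \<and> {u,n} \<in> EE \<and> (lay n = L \<or> lay n = L + 1)" if "n \<in> nbrs u" for n
  proof -
    have e: "{u,n} \<in> EE" using that unfolding nbrs_def by simp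
    then have "n \<in> FB" "n \<noteq> u" using edgeD by auto
    moreover have "lay n \<ge> L" using L_le[OF \<open>n \<in> FB\<close>] .
    ultimately show ?thesis using nb_lay[OF e] l e by auto
  qed
  have mmF: "mm n \<in> FB \<and> lay (mm n) = L + 1 \<and> {n, mm n} \<in> EE" if "n \<in> FB" "lay n = L" for n
  proof -
    have "vp n (upv ({} \<union> Bs n)) \<in> FB" by (rule up_ok) (use that l in auto)
    then have m: "mm n \<in> FB" unfolding mm_def by simp
    moreover have "{n, mm n} \<in> EE" by (rule edgeI[OF that(1) m upv_gr]) (simp add: mm_def)
    ultimately show ?thesis using that unfolding mm_def by simp
  qed
  define W where "W = f ` nbrs u"
  have inj: "inj_on f (nbrs u)"
  proof (rule inj_onI)
    fix n n' assume "n \<in> nbrs u" "n' \<in> nbrs u" "f n = f n'"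
    then show "n = n'" unfolding f_def by (auto split: if_splits)
  qed
  have "dd \<le> degree EE u" by (rule mindeg_le[OF u])
  also have "\<dots> = card W" unfolding W_def degree_nbrs using inj by (simp add: card_image)
  finally have ddc: "dd \<le> card W" .
  show ?thesis
  proof (rule Rel_family[OF _ ddc])
    show "finite W" unfolding W_def using fin_nbrs by simp
  next
    fix P assume "P \<in> W"
    then obtain n where n: "n \<in> nbrs u" "P = f n" unfolding W_def by auto
    note N = nbF[OF n(1)]
    show "P \<noteq> [] \<and> hd P = u \<and> walk EE P \<and> Rel EE dd (last P) v0"
    proof (cases "lay n = L + 1")
      case True then show ?thesis using n N IH l unfolding f_def by auto
    next
      case False
      then have "lay n = L" using N by auto
      then show ?thesis using n N IH l mmF[of n] False unfolding f_def by auto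
    qed
  next
    fix P Q assume PQ: "P \<in> W" "Q \<in> W" "P \<noteq> Q"
    then obtain n n' where n: "n \<in> nbrs u" "P = f n" and n': "n' \<in> nbrs u" "Q = f n'" unfolding W_def by auto
    then have nn: "n \<noteq> n'" using PQ(3) by auto
    note N = nbF[OF n(1)] and N' = nbF[OF n'(1)]
    have M1: "lay n = L \<Longrightarrow> lay (mm n) = L + 1" using mmF N by auto
    have M2: "lay n' = L \<Longrightarrow> lay (mm n') = L + 1" using mmF N' by auto
    show "wedges P \<inter> wedges Q = {}"
      using n n' nn N N' M1 M2 l unfolding f_def
      by (auto simp: doubleton_eq_iff split: if_splits)
  qed
qed

end


lemma sig_disj: assumes "\<And>e e'. e \<in> wedges P \<Longrightarrow> e' \<in> wedges R \<Longrightarrow> f ` e \<noteq> f ` e'"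
  shows "wedges P \<inter> wedges R = {}"
  using assms by blast

context LK2 begin

lemma M_neg: "M p (-\<sigma>) i = - M p \<sigma> i" unfolding M_def by auto

definition tog :: "nat \<Rightarrow> nat set \<Rightarrow> nat set" where
  "tog p C = (if p \<in> C then C - {p} else insert p C)"

lemma tog_in: "q \<noteq> p \<Longrightarrow> q \<in> tog p C \<longleftrightarrow> q \<in> C" unfolding tog_def by auto

lemma toggle: assumes p: "p < 2*k" and s: "\<sigma> = 1 \<or> \<sigma> = -1" and c: "p \<in> C \<longleftrightarrow> \<sigma> * sg p = -1"
  shows "upv (tog p C) i = M p \<sigma> i + upv C i"
proof (rule conf_allI[of "\<lambda>i. upv (tog p C) i = M p \<sigma> i + upv C i"])
  fix q assume q: "q < 2*k"
  show "upv (tog p C) (pa q) = M p \<sigma> (pa q) + upv C (pa q)"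
    "upv (tog p C) (pa q + k) = M p \<sigma> (pa q + k) + upv C (pa q + k)"
  proof -
    show "upv (tog p C) (pa q) = M p \<sigma> (pa q) + upv C (pa q)"
    proof (cases "q = p")
      case True
      show ?thesis
      proof (cases "p < k")
        case pk: True
        then show ?thesis using True p s c by (cases "\<sigma> = 1") (auto simp: tog_def ind_def sg_def)
      next
        case pk: False
        then show ?thesis using True p s c by (cases "\<sigma> = 1") (auto simp: tog_def ind_def sg_def)
      qed
    next
      case False
      then show ?thesis using p q by (simp add: tog_in)
    qed
    show "upv (tog p C) (pa q + k) = M p \<sigma> (pa q + k) + upv C (pa q + k)"
    proof (cases "q = p")
      case True
      show ?thesis
      proof (cases "p < k")
        case pk: True
        then show ?thesis using True p s c by (cases "\<sigma> = 1") (auto simp: tog_def ind_def sg_def)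
      next
        case pk: False
        then show ?thesis using True p s c by (cases "\<sigma> = 1") (auto simp: tog_def ind_def sg_def)
      qed
    next
      case False
      then show ?thesis using p q by (simp add: tog_in)
    qed
  qed
qed (use p in auto)


definition xc :: "(nat \<Rightarrow> int) \<Rightarrow> nat set \<Rightarrow> bool" where
  "xc u C \<longleftrightarrow> (\<forall>q<k. (q \<in> C \<longrightarrow> u (pa q) \<ge> 1) \<and> (q \<notin> C \<longrightarrow> u (pa q + k) \<ge> 1))"

lemma tau_cond: assumes u: "u \<in> FB" and q: "q < 2*k" and w: "wd q (lay u) \<ge> 1"
  shows "0 \<le> u (pa q) + tau u q \<and> 0 \<le> u (pa q + k) - tau u q"
proof -
  have "u (pa q) + u (pa q + k) = wd q (lay u)" using fibD[OF u] q by auto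
  then show ?thesis using fib_nn[OF u q] w unfolding tau_def by auto
qed


lemma top_pair:
  assumes u: "u \<in> FB" "lay u = H" and p: "p < 2*k" and s: "\<sigma> = 1 \<or> \<sigma> = -1"
    and u'0: "vp u (M p \<sigma>) \<in> FB"
  shows "Rel EE dd u (vp u (M p \<sigma>))"
proof -
  define u' where "u' = vp u (M p \<sigma>)"
  have u'F: "u' \<in> FB" "lay u' = H" using u'0 u p unfolding u'_def by auto
  have uu': "u' (pa q) = u (pa q)" "u' (pa q + k) = u (pa q + k)" if "q < 2*k" "q \<noteq> p" for q
    using that p unfolding u'_def by auto
  have up: "u' (pa p) = u (pa p) + \<sigma>" "u' (pa p + k) = u (pa p + k) - \<sigma>" using p unfolding u'_def by auto
  have pNZ: "p \<in> NZ"
  proof -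
    have "0 \<le> u' (pa p)" "0 \<le> u' (pa p + k)" "0 \<le> u (pa p)" "0 \<le> u (pa p + k)"
      using fib_nn[OF u'F(1) p] fib_nn[OF u(1) p] by auto
    moreover have "u (pa p) + u (pa p + k) = wd p H" using fibD[OF u(1)] p u(2) by auto
    ultimately show ?thesis using up s p unfolding NZ_def by auto
  qed
  have uneq: "u \<noteq> u'"
  proof
    assume "u = u'" then have "u (pa p) = u' (pa p)" by simp
    then show False using up s by auto
  qed
  have e0: "{u, u'} \<in> EE" by (rule edgeI[OF u(1) u'F(1) M_gr[OF p s]]) (simp add: u'_def)
  define x where "x q = vp u (M q (tau u q))" for q
  define y where "y q = vp u' (M q (tau u q))" for q
  have sqF: "x q \<in> FB \<and> y q \<in> FB \<and> lay (x q) = H \<and> lay (y q) = H \<and> {u, x q} \<in> EE \<and> {x q, y q} \<in> EE \<and>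
     {y q, u'} \<in> EE \<and> x q (pa q) \<noteq> u (pa q) \<and> y q (pa q) \<noteq> u (pa q) \<and>
     (\<forall>r<2*k. r \<noteq> q \<longrightarrow> r \<noteq> p \<longrightarrow> x q (pa r) = u (pa r) \<and> y q (pa r) = u (pa r))"
    if q: "q \<in> NZ" "q \<noteq> p" for q
  proof -
    have q2: "q < 2*k" and wq: "wd q (lay u) \<ge> 1" using q u(2) unfolding NZ_def by auto
    note tc = tau_cond[OF u(1) q2 wq]
    have xF: "x q \<in> FB" unfolding x_def by (rule tau_ok[OF u(1) q2 wq])
    have yF: "y q \<in> FB" unfolding y_def by (rule mv_ok[OF u'F(1) q2]) (use tc uu'[OF q2 q(2)] in auto)
    have e1: "{u, x q} \<in> EE" by (rule edgeI[OF u(1) xF M_gr[OF q2 tau_pm]]) (simp add: x_def)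
    have e2: "{x q, y q} \<in> EE" by (rule edgeI[OF xF yF M_gr[OF p s]]) (simp add: x_def y_def u'_def algebra_simps)
    have e3: "{y q, u'} \<in> EE" by (rule edgeI'[OF u'F(1) yF M_gr[OF q2 tau_pm]]) (simp add: y_def)
    have "tau u q \<noteq> 0" using tau_pm[of u q] by auto
    then show ?thesis using xF yF e1 e2 e3 q2 q(2) u'F(2) u(2) uu' p
      unfolding x_def y_def by auto
  qed
  define As where "As = {q. q < k \<and> q \<noteq> p \<and> u (pa q) \<ge> 1} \<union> (if p < k \<and> \<sigma> = -1 then {p} else {})"
  define CC where "CC D = As \<union> D" for D
  define c where "c D = vm u (upv (CC D))" for D
  define two where "two D \<longleftrightarrow> (p \<in> CC D \<longleftrightarrow> \<sigma> * sg p = -1)" for D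
  define d1 where "d1 D = vm u (upv (tog p (CC D)))" for D
  define d2 where "d2 D = vm u' (upv (tog p (CC D)))" for D
  define dw where "dw D = (if two D then [u, c D, u'] else [u, c D, d1 D, d2 D, u'])" for D
  have As_lt: "As \<subseteq> {..<k}" unfolding As_def by auto
  have sgp: "\<sigma> * sg p = 1 \<or> \<sigma> * sg p = -1" using s by (auto simp: sg_def)
  have xcD: "xc u (CC D)" if "DnH" "D \<subseteq> {k..<2*k}" for D
    unfolding xc_def
  proof (intro allI impI conjI)
    fix q assume q: "q < k"
    have q2: "q < 2*k" using q by simp
    have sumq: "u (pa q) + u (pa q + k) = wd q H" using fibD[OF u(1)] q2 u(2) by auto
    have wq: "wd q H \<ge> 1" using that(1) q unfolding DnH_def by auto
    have nn: "0 \<le> u (pa q)" "0 \<le> u' (pa q)" "0 \<le> u' (pa q + k)" using fib_nn[OF u(1) q2] fib_nn[OF u'F(1) q2] by auto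
    show "q \<in> CC D \<Longrightarrow> 1 \<le> u (pa q)"
      using that(2) q up nn unfolding CC_def As_def by (auto split: if_splits)
    show "q \<notin> CC D \<Longrightarrow> 1 \<le> u (pa q + k)"
    proof -
      assume "q \<notin> CC D"
      then have h: "q \<notin> As" unfolding CC_def by auto
      show "1 \<le> u (pa q + k)"
      proof (cases "q = p")
        case True
        then have "\<sigma> = 1" using h q s unfolding As_def by auto
        then show ?thesis using up nn True by auto
      next
        case False
        then have "u (pa q) < 1" using h q unfolding As_def by auto
        then show ?thesis using sumq wq nn by auto
      qed
    qed
  qed
  have notwo_pk: "k \<le> p" if "\<not> two D" "D \<subseteq> {k..<2*k}" for D
  proof (rule ccontr)
    assume "\<not> k \<le> p"
    then have "p < k" by simp
    then have "p \<in> CC D \<longleftrightarrow> \<sigma> = -1" unfolding CC_def As_def using that(2) by auto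
    then show False using that(1) \<open>p < k\<close> s unfolding two_def sg_def by auto
  qed
  have cF: "c D \<in> FB \<and> lay (c D) = H - 1 \<and> {u, c D} \<in> EE" if "DnH" "D \<subseteq> {k..<2*k}" for D
  proof -
    have cf: "c D \<in> FB" unfolding c_def
      by (rule dn_ok[OF u(1)]) (use that(1) u(2) xcD[OF that] in \<open>auto simp: DnH_def xc_def\<close>)
    moreover have "{u, c D} \<in> EE" by (rule edgeI'[OF cf u(1) upv_gr]) (simp add: c_def)
    ultimately show ?thesis unfolding c_def using u(2) by simp
  qed
  have twoE: "{c D, u'} \<in> EE" if "DnH" "D \<subseteq> {k..<2*k}" "two D" for D
  proof (rule edgeI[OF conjunct1[OF cF[OF that(1,2)]] u'F(1) upv_gr])
    fix i
    have "upv (tog p (CC D)) i = M p \<sigma> i + upv (CC D) i"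
      by (rule toggle[OF p s]) (use that(3) in \<open>simp add: two_def\<close>)
    then show "u' i = c D i + upv (tog p (CC D)) i" unfolding u'_def c_def by simp
  qed
  have zigF: "d1 D \<in> FB \<and> d2 D \<in> FB \<and> lay (d1 D) = H - 1 \<and> lay (d2 D) = H - 1 \<and>
      {c D, d1 D} \<in> EE \<and> {d1 D, d2 D} \<in> EE \<and> {d2 D, u'} \<in> EE"
    if "DnH" "D \<subseteq> {k..<2*k}" "\<not> two D" for D
  proof -
    have pk: "k \<le> p" using notwo_pk[OF that(3,2)] .
    have tg: "upv (tog p (CC D)) i = M p (-\<sigma>) i + upv (CC D) i" for i
      by (rule toggle[OF p]) (use s that(3) sgp in \<open>auto simp: two_def\<close>)
    have xt: "q \<in> tog p (CC D) \<longleftrightarrow> q \<in> CC D" if "q < k" for q using that pk tog_in[of q p] by auto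
    have xcT: "xc u (tog p (CC D))" using xcD[OF that(1,2)] xt unfolding xc_def by auto
    have xcT': "xc u' (tog p (CC D))" using xcT uu' pk unfolding xc_def by auto
    have H1: "H \<ge> 1" using that(1) unfolding DnH_def by simp
    have f1: "d1 D \<in> FB" unfolding d1_def
      by (rule dn_ok[OF u(1)]) (use H1 u(2) xcT in \<open>auto simp: xc_def\<close>)
    have f2: "d2 D \<in> FB" unfolding d2_def
      by (rule dn_ok[OF u'F(1)]) (use H1 u'F(2) xcT' in \<open>auto simp: xc_def\<close>)
    have cf: "c D \<in> FB" using cF[OF that(1,2)] by simp
    have g1: "{c D, d1 D} \<in> EE"
      by (rule edgeI[OF cf f1 M_gr[OF p s]]) (simp add: c_def d1_def tg M_neg)
    have g2: "{d1 D, d2 D} \<in> EE"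
      by (rule edgeI[OF f1 f2 M_gr[OF p s]]) (simp add: d1_def d2_def u'_def)
    have g3: "{d2 D, u'} \<in> EE"
      by (rule edgeI[OF f2 u'F(1) upv_gr]) (simp add: d2_def)
    show ?thesis using f1 f2 g1 g2 g3 u(2) u'F(2) unfolding d1_def d2_def by simp
  qed
  have zc: "c D (pa r) = u (pa r) + ind (r \<in> D)" if "D \<subseteq> {k..<2*k}" "k \<le> r" "r < 2*k" for D r
    using that As_lt unfolding c_def CC_def by (auto simp: sg_def ind_def)
  have zd: "d1 D (pa r) = u (pa r) + ind (r \<in> D) \<and> d2 D (pa r) = u (pa r) + ind (r \<in> D)"
    if "D \<subseteq> {k..<2*k}" "k \<le> r" "r < 2*k" "r \<noteq> p" for D r
    using that As_lt uu'[of r] tog_in[of r p] unfolding d1_def d2_def CC_def by (auto simp: sg_def ind_def)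
  have lay3: "lay (c D) = H - 1" "lay (d1 D) = H - 1" "lay (d2 D) = H - 1" for D
    unfolding c_def d1_def d2_def using u(2) u'F(2) by simp_all
  define sq where "sq q = [u, x q, y q, u']" for q
  define W0 where "W0 = {[u, u']}"
  define Wsq where "Wsq = sq ` (NZ - {p})"
  define Wdn where "Wdn = (if DnH then dw ` Pow {k..<2*k} else {})"
  have xinj: "q = q'" if "q \<in> NZ - {p}" "q' \<in> NZ - {p}" "x q = x q'" for q q'
  proof (rule ccontr)
    assume "q \<noteq> q'"
    then have "x q' (pa q) = u (pa q)" using sqF[of q'] that(1,2) unfolding NZ_def by auto
    moreover have "x q (pa q) \<noteq> u (pa q)" using sqF[of q] that(1) by auto
    ultimately show False using that(3) by simp
  qed
  have cinj: "D = D'" if "D \<subseteq> {k..<2*k}" "D' \<subseteq> {k..<2*k}" "c D = c D'" for D D'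
  proof -
    have "r \<in> D \<longleftrightarrow> r \<in> D'" if r: "k \<le> r" "r < 2*k" for r
      using zc[OF \<open>D \<subseteq> _\<close> r] zc[OF \<open>D' \<subseteq> _\<close> r] \<open>c D = c D'\<close> by (auto simp: ind_def split: if_splits)
    then show ?thesis using that(1,2) by auto
  qed
  have cWsq: "card Wsq = card NZ - 1"
  proof -
    have "inj_on sq (NZ - {p})" by (rule inj_onI) (use xinj in \<open>auto simp: sq_def\<close>)
    then have "card Wsq = card (NZ - {p})" unfolding Wsq_def by (simp add: card_image)
    also have "\<dots> = card NZ - 1" using pNZ by (simp add: NZ_def)
    finally show ?thesis .
  qed
  have cWdn: "card Wdn = (if DnH then 2^k else 0)"
  proof (cases DnH)
    case True
    have "inj_on dw (Pow {k..<2*k})"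
    proof (rule inj_onI)
      fix D D' assume DD: "D \<in> Pow {k..<2*k}" "D' \<in> Pow {k..<2*k}" "dw D = dw D'"
      then have "c D = c D'" unfolding dw_def by (auto split: if_splits)
      then show "D = D'" using cinj DD by auto
    qed
    then show ?thesis using True unfolding Wdn_def by (simp add: card_image card_Pow)
  qed (simp add: Wdn_def)
  have len: "length P = 2" if "P \<in> W0" for P using that unfolding W0_def by auto
  have lsq: "length P = 4" if "P \<in> Wsq" for P using that unfolding Wsq_def sq_def by auto
  have ldn: "length P = 3 \<or> length P = 5" if "P \<in> Wdn" for P
    using that unfolding Wdn_def dw_def by (auto split: if_splits)
  have fW: "finite (W0 \<union> Wsq \<union> Wdn)" unfolding W0_def Wsq_def Wdn_def NZ_def by auto
  have cW: "card (W0 \<union> Wsq \<union> Wdn) = card NZ + (if DnH then 2^k else 0)"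
  proof -
    have d1': "W0 \<inter> Wsq = {}" using len lsq by force
    have d2': "(W0 \<union> Wsq) \<inter> Wdn = {}" using len lsq ldn by force
    have f0: "finite W0" "finite Wsq" "finite Wdn" using fW by auto
    have "card (W0 \<union> Wsq \<union> Wdn) = card W0 + card Wsq + card Wdn"
      using d1' d2' f0 by (simp add: card_Un_disjoint)
    moreover have "card NZ \<ge> 1" using pNZ by (metis One_nat_def card_0_eq empty_iff finite_subset fW less_one not_le finite_nat_set_iff_bounded NZ_def mem_Collect_eq)
    ultimately show ?thesis using cWsq cWdn unfolding W0_def by simp
  qed
  have ddc: "dd \<le> card (W0 \<union> Wsq \<union> Wdn)" using delta_le cW by simp
  have Esq: "\<exists>z\<in>e. z (pa q) \<noteq> u (pa q)" if "q \<in> NZ - {p}" "e \<in> wedges (sq q)" for q e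
    using that sqF[of q] unfolding sq_def by auto
  have Vsq: "z (pa q) = u (pa q)" if "q \<in> NZ - {p}" "q' \<in> NZ - {p}" "q \<noteq> q'" "z \<in> set (sq q')" for q q' z
    using that sqF[of q'] uu'[of q] unfolding sq_def NZ_def by auto
  have V0: "z (pa q) = u (pa q)" if "q \<in> NZ - {p}" "z \<in> set [u, u']" for q z
    using that uu'[of q] unfolding NZ_def by auto
  have layH: "lay z = H" if zP: "z \<in> set P" "P \<in> W0 \<union> Wsq" for z P
  proof (cases "P \<in> W0")
    case True then show ?thesis using zP u(2) u'F(2) unfolding W0_def by auto
  next
    case False
    then obtain q where q: "q \<in> NZ - {p}" "P = sq q" using zP(2) unfolding Wsq_def by auto
    have "q \<in> NZ" "q \<noteq> p" using q(1) by auto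
    note S = sqF[OF this]
    show ?thesis using zP(1) q(2) S u(2) u'F(2) unfolding sq_def by auto
  qed
  have Edn: "\<exists>z\<in>e. lay z = H - 1 \<and> (\<forall>r. k \<le> r \<longrightarrow> r < 2*k \<longrightarrow> r \<noteq> p \<longrightarrow> z (pa r) = u (pa r) + ind (r \<in> D))"
    if "D \<subseteq> {k..<2*k}" "e \<in> wedges (dw D)" for D e
    using that zc[OF that(1)] zd[OF that(1)] lay3 unfolding dw_def by (auto split: if_splits)
  have Vdn: "lay z = H - 1 \<longrightarrow> (\<forall>r. k \<le> r \<longrightarrow> r < 2*k \<longrightarrow> r \<noteq> p \<longrightarrow> z (pa r) = u (pa r) + ind (r \<in> D))"
    if "D \<subseteq> {k..<2*k}" "z \<in> set (dw D)" for D z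
    using that zc[OF that(1)] zd[OF that(1)] lay3 u(2) u'F(2) unfolding dw_def by (auto split: if_splits)
  have sigcase: "wedges (dw D) \<inter> wedges (dw D') = {}"
    if DD: "D \<subseteq> {k..<2*k}" "D' \<subseteq> {k..<2*k}" "two D" "\<not> two D'" "p \<in> D \<longleftrightarrow> p \<notin> D'" for D D'
  proof -
    have pk: "k \<le> p" using notwo_pk[OF DD(4,2)] .
    have sgp': "sg p = -1" using pk by (simp add: sg_def)
    have pCC: "p \<in> CC D \<longleftrightarrow> p \<in> D" "p \<in> CC D' \<longleftrightarrow> p \<in> D'" using As_lt pk unfolding CC_def by auto
    have t1: "p \<in> D \<longleftrightarrow> \<sigma> = 1" using DD(3) pCC sgp' s unfolding two_def by auto
    define f where "f z = (lay z, z (pa p))" for z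
    have fu: "f u = (H, u (pa p))" "f u' = (H, u (pa p) + \<sigma>)" unfolding f_def using u(2) u'F(2) up by auto
    have fc: "f (c D) = (H - 1, u (pa p) + ind (p \<in> D))" "f (c D') = (H - 1, u (pa p) + ind (p \<in> D'))"
      unfolding f_def using lay3 zc[OF DD(1) pk p] zc[OF DD(2) pk p] by auto
    have fd: "f (d1 D') = (H - 1, u (pa p) + ind (p \<in> D))" "f (d2 D') = (H - 1, u (pa p) + \<sigma> + ind (p \<in> D))"
      unfolding f_def d1_def d2_def using lay3 u(2) u'F(2) p DD(5) pCC up sgp' unfolding d1_def d2_def
      by (auto simp: tog_def ind_def)
    have dwD: "dw D = [u, c D, u']" "dw D' = [u, c D', d1 D', d2 D', u']" using DD(3,4) unfolding dw_def by auto
    show ?thesis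
    proof (rule sig_disj[where f = f])
      fix e e' assume "e \<in> wedges (dw D)" "e' \<in> wedges (dw D')"
      then show "f ` e \<noteq> f ` e'" unfolding dwD using fu fc fd t1 s DD(5)
        by (auto simp: doubleton_eq_iff ind_def)
    qed
  qed
  show ?thesis
  proof (rule Rel_family[OF fW ddc])
    fix P assume "P \<in> W0 \<union> Wsq \<union> Wdn"
    then consider "P \<in> W0" | "P \<in> Wsq" | "P \<in> Wdn" by blast
    then show "P \<noteq> [] \<and> hd P = u \<and> walk EE P \<and> Rel EE dd (last P) (vp u (M p \<sigma>))"
    proof cases
      case 1 then show ?thesis using e0 unfolding W0_def u'_def by (auto simp: Rel_refl)
    next
      case 2
      then obtain q where q: "q \<in> NZ - {p}" "P = sq q" unfolding Wsq_def by auto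
      then show ?thesis using sqF[of q] unfolding sq_def u'_def by (auto simp: Rel_refl)
    next
      case 3
      then obtain D where D: "DnH" "D \<subseteq> {k..<2*k}" "P = dw D" unfolding Wdn_def by (auto split: if_splits)
      show ?thesis
      proof (cases "two D")
        case True
        then show ?thesis using D cF[OF D(1,2)] twoE[OF D(1,2) True] unfolding dw_def u'_def
          by (auto simp: Rel_refl)
      next
        case False
        then show ?thesis using D cF[OF D(1,2)] zigF[OF D(1,2) False] unfolding dw_def u'_def
          by (auto simp: Rel_refl)
      qed
    qed
  next
    fix P Q assume PQ: "P \<in> W0 \<union> Wsq \<union> Wdn" "Q \<in> W0 \<union> Wsq \<union> Wdn" "P \<noteq> Q"
    have dn_vs_H: "wedges P' \<inter> wedges Q' = {}" if TT: "P' \<in> Wdn" "Q' \<in> W0 \<union> Wsq" for P' Q'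
    proof -
      obtain D where D: "D \<subseteq> {k..<2*k}" "P' = dw D" using TT(1) unfolding Wdn_def by (auto split: if_splits)
      show ?thesis
      proof (rule sep_disj[where Q = "\<lambda>z. lay z = H - 1"])
        fix e assume "e \<in> wedges P'"
        then have "e \<in> wedges (dw D)" using D(2) by simp
        from Edn[OF D(1) this] show "\<exists>z\<in>e. lay z = H - 1" by blast
      next
        fix z assume "z \<in> set Q'"
        then show "\<not> lay z = H - 1" using layH[OF _ TT(2)] by simp
      qed
    qed
    have sq_vs: "wedges P' \<inter> wedges Q' = {}" if TT: "P' \<in> Wsq" "Q' \<in> W0 \<union> Wsq" "P' \<noteq> Q'" for P' Q'
    proof -
      obtain q where q: "q \<in> NZ - {p}" "P' = sq q" using TT(1) unfolding Wsq_def by auto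
      have "\<not> z (pa q) \<noteq> u (pa q)" if "z \<in> set Q'" for z
      proof (cases "Q' \<in> W0")
        case True then show ?thesis using V0[OF q(1)] that unfolding W0_def by auto
      next
        case False
        then obtain q' where q': "q' \<in> NZ - {p}" "Q' = sq q'" using \<open>Q' \<in> W0 \<union> Wsq\<close> unfolding Wsq_def by auto
        then have "q \<noteq> q'" using q \<open>P' \<noteq> Q'\<close> by auto
        then show ?thesis using Vsq[OF q(1) q'(1)] that q' by auto
      qed
      then show ?thesis
        by (intro sep_disj[where Q = "\<lambda>z. z (pa q) \<noteq> u (pa q)"]) (use Esq[OF q(1)] q in auto)
    qed
    have dn_dn: "wedges P' \<inter> wedges Q' = {}" if TT: "P' \<in> Wdn" "Q' \<in> Wdn" "P' \<noteq> Q'" for P' Q'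
    proof -
      obtain D where D: "DnH" "D \<subseteq> {k..<2*k}" "P' = dw D" using TT(1) unfolding Wdn_def by (auto split: if_splits)
      obtain D' where D': "D' \<subseteq> {k..<2*k}" "Q' = dw D'" using TT(2) unfolding Wdn_def by (auto split: if_splits)
      have DD: "D \<noteq> D'" using TT(3) D D' by auto
      show ?thesis
      proof (cases "\<exists>r. k \<le> r \<and> r < 2*k \<and> r \<noteq> p \<and> (r \<in> D \<longleftrightarrow> r \<notin> D')")
        case True
        then obtain r where r: "k \<le> r" "r < 2*k" "r \<noteq> p" "r \<in> D \<longleftrightarrow> r \<notin> D'" by blast
        show ?thesis
        proof (rule sep_disj[where Q = "\<lambda>z. lay z = H - 1 \<and> z (pa r) = u (pa r) + ind (r \<in> D)"])
          fix e assume "e \<in> wedges P'"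
          then show "\<exists>z\<in>e. lay z = H - 1 \<and> z (pa r) = u (pa r) + ind (r \<in> D)"
            using Edn[OF D(2)] D(3) r by blast
        next
          fix z assume zQ: "z \<in> set Q'"
          show "\<not> (lay z = H - 1 \<and> z (pa r) = u (pa r) + ind (r \<in> D))"
          proof
            assume h: "lay z = H - 1 \<and> z (pa r) = u (pa r) + ind (r \<in> D)"
            then have "z (pa r) = u (pa r) + ind (r \<in> D')" using Vdn[OF D'(1)] D'(2) zQ r by blast
            then show False using h r by (auto simp: ind_def)
          qed
        qed
      next
        case False
        obtain x0 where x0: "(x0 \<in> D) \<noteq> (x0 \<in> D')" using DD by blast
        then have "k \<le> x0" "x0 < 2*k" using D(2) D'(1) by auto
        then have "x0 = p" using False x0 by blast
        then have pdiff: "p \<in> D \<longleftrightarrow> p \<notin> D'" using x0 by blast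
        then have pk: "k \<le> p" using D(2) D'(1) by auto
        have "two D \<longleftrightarrow> \<not> two D'" using pdiff pk As_lt unfolding two_def CC_def by auto
        then show ?thesis
        proof (cases "two D")
          case True
          then show ?thesis using sigcase[OF D(2) D'(1) True] pdiff D(3) D'(2) \<open>two D \<longleftrightarrow> \<not> two D'\<close> by auto
        next
          case False
          then have "two D'" using \<open>two D \<longleftrightarrow> \<not> two D'\<close> by simp
          then have "wedges (dw D') \<inter> wedges (dw D) = {}"
            using sigcase[OF D'(1) D(2)] pdiff False by auto
          then show ?thesis using D(3) D'(2) by auto
        qed
      qed
    qed
    show "wedges P \<inter> wedges Q = {}"
    proof (cases "P \<in> Wdn")
      case True
      show ?thesis
      proof (cases "Q \<in> Wdn")
        case True then show ?thesis using dn_dn \<open>P \<in> Wdn\<close> PQ(3) by blast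
      next
        case False then show ?thesis using dn_vs_H \<open>P \<in> Wdn\<close> PQ(2) by blast
      qed
    next
      case Pn: False
      show ?thesis
      proof (cases "Q \<in> Wdn")
        case True
        then have "wedges Q \<inter> wedges P = {}" using dn_vs_H PQ(1) Pn by blast
        then show ?thesis by auto
      next
        case Qn: False
        show ?thesis
        proof (cases "P \<in> Wsq")
          case True then show ?thesis using sq_vs PQ Qn by blast
        next
          case False
          then have P0: "P \<in> W0" using PQ(1) Pn by blast
          then have "Q \<in> Wsq" using PQ(2,3) Qn unfolding W0_def by auto
          then have "wedges Q \<inter> wedges P = {}" using sq_vs P0 PQ(3) by blast
          then show ?thesis by auto
        qed
      qed
    qed
  qed
qed

end


context LK2 begin

definition dist :: "(nat \<Rightarrow> int) \<Rightarrow> (nat \<Rightarrow> int) \<Rightarrow> nat" where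
  "dist u v = (\<Sum>q<2*k. nat \<bar>u (pa q) - v (pa q)\<bar>)"

lemma top_all: assumes "u \<in> FB" "v \<in> FB" "lay u = H" "lay v = H" shows "Rel EE dd u v"
  using assms
proof (induction "dist u v" arbitrary: u rule: less_induct)
  case less
  note u = less.prems(1) and v = less.prems(2) and lu = less.prems(3) and lv = less.prems(4)
  show ?case
  proof (cases "\<forall>q<2*k. u (pa q) = v (pa q)")
    case True
    have "u = v"
    proof (rule vec_eqI)
      fix q assume q: "q < 2*k"
      show "u (pa q) = v (pa q)" using True q by simp
      have "u (pa q) + u (pa q + k) = wd q H" "v (pa q) + v (pa q + k) = wd q H"
        using fibD[OF u] fibD[OF v] q lu lv by auto
      then show "u (pa q + k) = v (pa q + k)" using True q by simp
    next
      show "u (4*k) = v (4*k)" using lu lv unfolding lay_def by simp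
      show "u (Suc (4*k)) = v (Suc (4*k))" using fibD[OF u] fibD[OF v] lu lv by simp
    next
      fix j assume "4*k+2 \<le> j"
      then show "u j = v j" using u v unfolding fiber_iff Zvec_def by auto
    qed
    then show ?thesis by (simp add: Rel_refl)
  next
    case False
    then obtain q where q: "q < 2*k" "u (pa q) \<noteq> v (pa q)" by blast
    define \<sigma> where "\<sigma> = (if u (pa q) < v (pa q) then 1 else (-1::int))"
    have s: "\<sigma> = 1 \<or> \<sigma> = -1" unfolding \<sigma>_def by auto
    have su: "u (pa q) + u (pa q + k) = wd q H" "v (pa q) + v (pa q + k) = wd q H"
      using fibD[OF u] fibD[OF v] q lu lv by auto
    have nn: "0 \<le> u (pa q)" "0 \<le> u (pa q + k)" "0 \<le> v (pa q)" "0 \<le> v (pa q + k)"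
      using fib_nn[OF u q(1)] fib_nn[OF v q(1)] by auto
    have u'F: "vp u (M q \<sigma>) \<in> FB"
      by (rule mv_ok[OF u q(1)]) (use su nn q(2) in \<open>auto simp: \<sigma>_def\<close>)
    have lu': "lay (vp u (M q \<sigma>)) = H" using lu q(1) by simp
    have "dist (vp u (M q \<sigma>)) v < dist u v"
    proof -
      let ?f = "\<lambda>w r. nat \<bar>w (pa r) - v (pa r)\<bar>"
      have fin: "finite {..<2*k}" by simp
      have qin: "q \<in> {..<2*k}" using q by simp
      have e1: "dist u v = ?f u q + (\<Sum>r\<in>{..<2*k} - {q}. ?f u r)"
        unfolding dist_def by (rule sum.remove[OF fin qin])
      have e2: "dist (vp u (M q \<sigma>)) v = ?f (vp u (M q \<sigma>)) q + (\<Sum>r\<in>{..<2*k} - {q}. ?f (vp u (M q \<sigma>)) r)"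
        unfolding dist_def by (rule sum.remove[OF fin qin])
      have e3: "(\<Sum>r\<in>{..<2*k} - {q}. ?f (vp u (M q \<sigma>)) r) = (\<Sum>r\<in>{..<2*k} - {q}. ?f u r)"
        by (rule sum.cong) (use q in auto)
      have e4: "?f (vp u (M q \<sigma>)) q < ?f u q"
      proof (cases "u (pa q) < v (pa q)")
        case True then show ?thesis using q unfolding \<sigma>_def by simp
      next
        case False then show ?thesis using q unfolding \<sigma>_def by simp
      qed
      show ?thesis using e1 e2 e3 e4 by linarith
    qed
    then have h2: "Rel EE dd (vp u (M q \<sigma>)) v" using less.hyps[OF _ u'F v lu' lv] by simp
    have h1: "Rel EE dd u (vp u (M q \<sigma>))" by (rule top_pair[OF u lu q(1) s u'F])
    show ?thesis by (rule Rel_trans[OF h1 h2])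
  qed
qed

lemma all_rel: assumes v0: "v0 \<in> FB" "lay v0 = H" and uF: "u \<in> FB" shows "Rel EE dd u v0"
proof -
  have A: "\<forall>u\<in>FB. nat (H - lay u) = m \<longrightarrow> Rel EE dd u v0" for m
  proof (induction m)
    case 0
    show ?case
    proof (intro ballI impI)
      fix u assume u: "u \<in> FB" "nat (H - lay u) = 0"
      then have "lay u = H" using H_ge[OF u(1)] by simp
      then show "Rel EE dd u v0" using top_all[OF u(1) v0(1) _ v0(2)] by simp
    qed
  next
    case (Suc m)
    show ?case
    proof (intro ballI impI)
      fix u assume u: "u \<in> FB" "nat (H - lay u) = Suc m"
      then have lt: "lay u < H" by simp
      have IH: "Rel EE dd w v0" if w: "w \<in> FB" "lay w = lay u + 1" for w
      proof -
        have "nat (H - lay w) = m" using w(2) u(2) by simp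
        then show ?thesis using Suc.IH w(1) by blast
      qed
      show "Rel EE dd u v0"
      proof (cases "lay u = L")
        case True
        then have LH: "L < H" using lt by simp
        show ?thesis by (rule bot_step[OF u(1) True LH IH])
      next
        case False
        then have "L < lay u" using L_le[OF u(1)] by simp
        then show ?thesis by (rule mid_step[OF u(1) _ lt IH])
      qed
    qed
  qed
  have "nat (H - lay u) = nat (H - lay u)" by (rule refl)
  then show "Rel EE dd u v0" using A[of "nat (H - lay u)"] uF by simp
qed

lemma main: "edge_connectivity FB EE = min_degree FB EE"
proof (rule ec_eq[OF fin_FB _ ne])
  fix e assume "e \<in> EE"
  then show "\<exists>x y. e = {x,y} \<and> x \<noteq> y \<and> x \<in> FB \<and> y \<in> FB" by (rule edgeE_shape)
next
  fix u v assume uv: "u \<in> FB" "v \<in> FB"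
  obtain v0 where v0: "v0 \<in> FB" "lay v0 = H" using H_ex by auto
  have a: "Rel EE dd u v0" using all_rel[OF v0 uv(1)] .
  have c: "Rel EE dd v v0" using all_rel[OF v0 uv(2)] .
  show "Rel EE dd u v" by (rule Rel_trans[OF a Rel_sym[OF c]])
qed

end

theorem theorem4:
  fixes k :: nat and b :: "nat \<Rightarrow> int"
  assumes "1 \<le> k"
    and "b \<in> Zvec (2*k+1)"
    and "fiber (Amat k) (2*k+1) (4*k+2) b \<noteq> {}"
  shows "edge_connectivity (fiber (Amat k) (2*k+1) (4*k+2) b)
           (fiber_edges (Amat k) (2*k+1) (4*k+2) b (graver (Amat k) (2*k+1) (4*k+2)))
         = min_degree (fiber (Amat k) (2*k+1) (4*k+2) b)
           (fiber_edges (Amat k) (2*k+1) (4*k+2) b (graver (Amat k) (2*k+1) (4*k+2)))"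
proof -
  interpret LK2 k b by unfold_locales (fact assms)+
  show ?thesis by (rule main)
qed


end
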